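(* Let $B_1$ and $B_2$ be bouquets whose signed intersection graphs $SI(B_1)$ and $SI(B_2)$ are isomorphic (via a graph isomorphism preserving signs). Then $P_\bullet(B_1,x)=P_\bullet(B_2,x)$ for every $\bullet\in\{\langle\delta\rangle,\langle\delta\tau\rangle,\langle\tau\delta\tau\rangle,\langle\delta,\tau\rangle\}$.
   Context: A ribbon graph $G=(V(G),E(G))$ is a (orientable or non-orientable) surface with boundary, represented as the union of a set $V(G)$ of vertex discs and a set $E(G)$ of edge discs (ribbons) such that vertices and edges intersect in disjoint line segments, each such segment lies on the boundary of exactly one vertex and exactly one edge, and every edge contains exactly two such segments. $v(G)$ denotes the number of vertices. A bouquet is a ribbon graph with exactly one vertex. A loop is non-orientable if the ribbon together with its vertex forms a Möbius band, and orientable otherwise. Two loops of a bouquet are interlaced if their ends alternate in the cyclic order around the vertex boundary. The intersection graph $I(B)$ of a bouquet $B$ has vertex set $E(B)$, two vertices adjacent iff the loops are interlaced; the signed intersection graph $SI(B)$ is $I(B)$ with each vertex signed $+$ if the loop is orientable and $-$ if non-orientable. For $A\subseteq E(G)$, the partial dual $G^{\delta(A)}$ is obtained by gluing a disc along each boundary component of the spanning ribbon subgraph $(V(G),A)$ (these discs become the vertex discs), removing the interiors of the original vertex discs, and keeping the edge ribbons. The partial Petrial $G^{\tau(A)}$ adds a half-twist to each edge in $A$. For a word $w=w_1\cdots w_n$ over $\{\delta,\tau\}$, $G^{w(A)}=(\cdots(G^{w_n(A)})^{w_{n-1}(A)}\cdots)^{w_1(A)}$ (rightmost letter applied first), $G^{1(A)}=G$,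 and $G^{\xi(A)\pi(B)}=(G^{\xi(A)})^{\pi(B)}$. Vertex polynomials (sums over ordered partitions of $E(G)$ into pairwise disjoint, possibly empty parts): $P_{\langle\delta\rangle}(G,x)=\sum_{A\subseteq E(G)}x^{v(G^{\delta(A)})}$; $P_{\langle\tau\delta\tau\rangle}(G,x)=\sum_{A\subseteq E(G)}x^{v(G^{\tau\delta\tau(A)})}$; $P_{\langle\delta\tau\rangle}(G,x)=\sum_{(A_1,A_2,A_3)}x^{v(G^{1(A_1)\tau\delta(A_2)\delta\tau(A_3)})}$; $P_{\langle\delta,\tau\rangle}(G,x)=\sum_{(A_1,\dots,A_6)}x^{v(G^{1(A_1)\delta(A_2)\tau(A_3)\tau\delta(A_4)\delta\tau(A_5)\tau\delta\tau(A_6)})}$. *)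

theory Defs
  imports "HOL-Computational_Algebra.Polynomial" "HOL-Library.FuncSet"
begin

text \<open>Combinatorial model of ribbon graphs: graph-encoded maps (gems).
A ribbon graph is given by a finite set of flags with three fixed-point-free
involutions r0 (changes vertex), r1 (changes edge), r2 (changes side/face),
such that r0 and r2 commute and r0 x differs from r2 x.
Vertices without any incident edge are not visible in flags, so they are counted
separately by the field isov.\<close>

record 'f rg =
  flags :: "'f set"
  r0 :: "'f \<Rightarrow> 'f"
  r1 :: "'f \<Rightarrow> 'f"
  r2 :: "'f \<Rightarrow> 'f"
  isov :: nat

definition fpf_invol :: "'f set \<Rightarrow> ('f \<Rightarrow> 'f) \<Rightarrow> bool" where
  "fpf_invol X f \<longleftrightarrow> (\<forall>x\<in>X. f x \<in> X \<and> f (f x) = x \<and> f x \<noteq> x)"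

definition ribbon_graph :: "'f rg \<Rightarrow> bool" where
  "ribbon_graph G \<longleftrightarrow> finite (flags G)
     \<and> fpf_invol (flags G) (r0 G) \<and> fpf_invol (flags G) (r1 G) \<and> fpf_invol (flags G) (r2 G)
     \<and> (\<forall>x\<in>flags G. r0 G (r2 G x) = r2 G (r0 G x) \<and> r0 G x \<noteq> r2 G x)"

definition orbit_of :: "('f \<Rightarrow> 'f) set \<Rightarrow> 'f \<Rightarrow> 'f set" where
  "orbit_of fs x = {y. (x, y) \<in> {(z, f z) | z f. f \<in> fs}\<^sup>*}"

definition vertices :: "'f rg \<Rightarrow> 'f set set" where
  "vertices G = {orbit_of {r1 G, r2 G} x | x. x \<in> flags G}"

definition edges :: "'f rg \<Rightarrow> 'f set set" where
  "edges G = {orbit_of {r0 G, r2 G} x | x. x \<in> flags G}"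

definition nv :: "'f rg \<Rightarrow> nat" where
  "nv G = card (vertices G) + isov G"

definition pdual :: "'f set set \<Rightarrow> 'f rg \<Rightarrow> 'f rg" where
  "pdual A G = G\<lparr> r0 := (\<lambda>x. if x \<in> \<Union>A then r2 G x else r0 G x),
                  r2 := (\<lambda>x. if x \<in> \<Union>A then r0 G x else r2 G x) \<rparr>"

definition ptwist :: "'f set set \<Rightarrow> 'f rg \<Rightarrow> 'f rg" where
  "ptwist A G = G\<lparr> r0 := (\<lambda>x. if x \<in> \<Union>A then r0 G (r2 G x) else r0 G x) \<rparr>"

text \<open>Words: rightmost letter applied first.
  G^{td(A)} = (G^{d(A)})^{t(A)}, G^{dt(A)} = (G^{t(A)})^{d(A)}, G^{tdt(A)}.\<close>
definition op_td :: "'f set set \<Rightarrow> 'f rg \<Rightarrow> 'f rg" where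
  "op_td A G = ptwist A (pdual A G)"
definition op_dt :: "'f set set \<Rightarrow> 'f rg \<Rightarrow> 'f rg" where
  "op_dt A G = pdual A (ptwist A G)"
definition op_tdt :: "'f set set \<Rightarrow> 'f rg \<Rightarrow> 'f rg" where
  "op_tdt A G = ptwist A (pdual A (ptwist A G))"

definition part :: "'f rg \<Rightarrow> ('f set \<Rightarrow> nat) \<Rightarrow> nat \<Rightarrow> 'f set set" where
  "part G c i = {e \<in> edges G. c e = i}"

definition P_d :: "'f rg \<Rightarrow> int poly" where
  "P_d G = (\<Sum>A\<in>Pow (edges G). monom 1 (nv (pdual A G)))"

definition P_tdt :: "'f rg \<Rightarrow> int poly" where
  "P_tdt G = (\<Sum>A\<in>Pow (edges G). monom 1 (nv (op_tdt A G)))"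

text \<open>Ordered partitions (A1,A2,A3) = colourings c : E(G) -> {0,1,2};
 G^{1(A1) td(A2) dt(A3)} = ((G^{1(A1)})^{td(A2)})^{dt(A3)}.\<close>
definition P_dt :: "'f rg \<Rightarrow> int poly" where
  "P_dt G = (\<Sum>c\<in>edges G \<rightarrow>\<^sub>E {..<3::nat}.
      monom 1 (nv (op_dt (part G c 2) (op_td (part G c 1) G))))"

text \<open>Ordered partitions (A1,...,A6) = colourings c : E(G) -> {0,...,5}.\<close>
definition P_dt_full :: "'f rg \<Rightarrow> int poly" where
  "P_dt_full G = (\<Sum>c\<in>edges G \<rightarrow>\<^sub>E {..<6::nat}.
      monom 1 (nv (op_tdt (part G c 5) (op_dt (part G c 4) (op_td (part G c 3)
                   (ptwist (part G c 2) (pdual (part G c 1) G)))))))"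

definition bouquet :: "'f rg \<Rightarrow> bool" where
  "bouquet G \<longleftrightarrow> ribbon_graph G \<and> nv G = 1"

text \<open>Walking around the boundary of the (single) vertex of a bouquet, starting at a
fixed flag: alternately r2 (staying on the same edge end) and r1 (moving to the next end).
Edge ends are the pairs of flags at positions 2j, 2j+1.\<close>
fun walk :: "'f rg \<Rightarrow> 'f \<Rightarrow> nat \<Rightarrow> 'f" where
  "walk G x 0 = x"
| "walk G x (Suc k) = (if even k then r2 G else r1 G) (walk G x k)"

definition pos :: "'f rg \<Rightarrow> 'f \<Rightarrow> nat" where
  "pos G y = (LEAST k. walk G (SOME x. x \<in> flags G) k = y)"

text \<open>A loop e is orientable iff r0 reverses the direction of traversal between its two ends.\<close>
definition orientable_loop :: "'f rg \<Rightarrow> 'f set \<Rightarrow> bool" where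
  "orientable_loop G e \<longleftrightarrow> (\<forall>x\<in>e. even (pos G x) \<longleftrightarrow> odd (pos G (r0 G x)))"

definition end_pos :: "'f rg \<Rightarrow> 'f set \<Rightarrow> nat set" where
  "end_pos G e = (\<lambda>y. pos G y div 2) ` e"

definition interlaced :: "'f rg \<Rightarrow> 'f set \<Rightarrow> 'f set \<Rightarrow> bool" where
  "interlaced G e f \<longleftrightarrow> e \<noteq> f \<and>
     (\<exists>p1\<in>end_pos G e. \<exists>p2\<in>end_pos G e. \<exists>q1\<in>end_pos G f. \<exists>q2\<in>end_pos G f.
        (p1 < q1 \<and> q1 < p2 \<and> p2 < q2) \<or> (q1 < p1 \<and> p1 < q2 \<and> q2 < p2))"

definition SI_iso :: "'a rg \<Rightarrow> 'b rg \<Rightarrow> bool" where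
  "SI_iso B1 B2 \<longleftrightarrow> (\<exists>\<phi>. bij_betw \<phi> (edges B1) (edges B2)
     \<and> (\<forall>e\<in>edges B1. \<forall>f\<in>edges B1. interlaced B1 e f \<longleftrightarrow> interlaced B2 (\<phi> e) (\<phi> f))
     \<and> (\<forall>e\<in>edges B1. orientable_loop B1 e \<longleftrightarrow> orientable_loop B2 (\<phi> e)))"

end

theory Submission
  imports Defs
begin


definition inv_on :: "'f set \<Rightarrow> ('f \<Rightarrow> 'f) \<Rightarrow> bool" where
  "inv_on F f \<longleftrightarrow> (\<forall>x\<in>F. f x \<in> F \<and> f (f x) = x)"

lemma orbit_self: "x \<in> orbit_of fs x"
  by (simp add: orbit_of_def)

lemma orbit_step: "y \<in> orbit_of fs x \<Longrightarrow> f \<in> fs \<Longrightarrow> f y \<in> orbit_of fs x"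
  unfolding orbit_of_def by (auto intro: rtrancl_into_rtrancl)

lemma orbit_min:
  assumes "x \<in> S" "\<And>y f. y \<in> S \<Longrightarrow> f \<in> fs \<Longrightarrow> f y \<in> S"
  shows "orbit_of fs x \<subseteq> S"
proof
  fix y assume "y \<in> orbit_of fs x"
  then have "(x, y) \<in> {(z, f z) | z f. f \<in> fs}\<^sup>*" by (simp add: orbit_of_def)
  then show "y \<in> S"
    by (induction rule: rtrancl_induct) (use assms in auto)
qed

lemma orbit_sub:
  assumes "x \<in> F" "\<And>f y. f \<in> fs \<Longrightarrow> y \<in> F \<Longrightarrow> f y \<in> F"
  shows "orbit_of fs x \<subseteq> F"
  using assms by (intro orbit_min) auto

lemma orbit_sym:
  assumes "x \<in> F" "\<And>f. f \<in> fs \<Longrightarrow> inv_on F f" "y \<in> orbit_of fs x"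
  shows "x \<in> orbit_of fs y"
proof -
  let ?R = "{(z, f z) | z f. f \<in> fs}"
  have "(x, y) \<in> ?R\<^sup>*" using assms(3) by (simp add: orbit_of_def)
  then have "(y, x) \<in> ?R\<^sup>* \<and> y \<in> F"
  proof (induction rule: rtrancl_induct)
    case base then show ?case using assms(1) by simp
  next
    case (step y z)
    then obtain f where f: "f \<in> fs" "z = f y" by blast
    have inv: "inv_on F f" using assms(2) f(1) by blast
    then have "f z = y" "z \<in> F" using step f by (auto simp: inv_on_def)
    then have "(z, y) \<in> ?R" using f by force
    then show ?case using step \<open>z \<in> F\<close> by (meson converse_rtrancl_into_rtrancl)
  qed
  then show ?thesis by (simp add: orbit_of_def)
qed

lemma orbit_eq:
  assumes "x \<in> F" "\<And>f. f \<in> fs \<Longrightarrow> inv_on F f" "y \<in> orbit_of fs x"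
  shows "orbit_of fs y = orbit_of fs x"
proof
  show "orbit_of fs y \<subseteq> orbit_of fs x"
    using assms(3) by (intro orbit_min) (auto intro: orbit_step)
  have "x \<in> orbit_of fs y" using orbit_sym[OF assms] .
  then show "orbit_of fs x \<subseteq> orbit_of fs y"
    by (intro orbit_min) (auto intro: orbit_step)
qed

lemma orbit_cong2:
  assumes "x \<in> F" "\<And>y. y \<in> F \<Longrightarrow> f y \<in> F" "\<And>y. y \<in> F \<Longrightarrow> g y \<in> F"
    "\<And>y. y \<in> F \<Longrightarrow> f' y = f y" "\<And>y. y \<in> F \<Longrightarrow> g' y = g y"
  shows "orbit_of {f', g'} x = orbit_of {f, g} x"
proof -
  have sub: "orbit_of {f, g} x \<subseteq> F" using assms by (intro orbit_sub) auto
  have sub': "orbit_of {f', g'} x \<subseteq> F" using assms by (intro orbit_sub) auto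
  show ?thesis
  proof
    show "orbit_of {f', g'} x \<subseteq> orbit_of {f, g} x"
    proof (rule orbit_min)
      fix y h assume y: "y \<in> orbit_of {f, g} x" and h: "h \<in> {f', g'}"
      have "y \<in> F" using y sub by blast
      then show "h y \<in> orbit_of {f, g} x" using h y assms(4,5) orbit_step[OF y, of f] orbit_step[OF y, of g] by auto
    qed (simp add: orbit_self)
    show "orbit_of {f, g} x \<subseteq> orbit_of {f', g'} x"
    proof (rule orbit_min)
      fix y h assume y: "y \<in> orbit_of {f', g'} x" and h: "h \<in> {f, g}"
      have "y \<in> F" using y sub' by blast
      then show "h y \<in> orbit_of {f', g'} x" using h y assms(4,5) orbit_step[OF y, of f'] orbit_step[OF y, of g'] by auto
    qed (simp add: orbit_self)
  qed
qed

lemma card_closed_sets: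
  assumes fin: "finite F" and f: "inv_on F f" and g: "inv_on F g"
  shows "card {S. S \<subseteq> F \<and> (\<forall>x\<in>S. f x \<in> S \<and> g x \<in> S)}
       = 2 ^ card {orbit_of {f, g} x | x. x \<in> F}"
proof -
  let ?O = "{orbit_of {f, g} x | x. x \<in> F}"
  let ?K = "{S. S \<subseteq> F \<and> (\<forall>x\<in>S. f x \<in> S \<and> g x \<in> S)}"
  have invs: "\<And>h. h \<in> {f, g} \<Longrightarrow> inv_on F h" using f g by auto
  have osub: "\<And>x. x \<in> F \<Longrightarrow> orbit_of {f, g} x \<subseteq> F"
    using f g by (intro orbit_sub) (auto simp: inv_on_def)
  have finO: "finite ?O" using fin by simp
  have "?K = Union ` Pow ?O"
  proof (intro set_eqI iffI)
    fix S assume S: "S \<in> ?K"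
    have "S = \<Union>{oo \<in> ?O. oo \<subseteq> S}"
    proof
      show "S \<subseteq> \<Union>{oo \<in> ?O. oo \<subseteq> S}"
      proof
        fix x assume "x \<in> S"
        then have "orbit_of {f, g} x \<subseteq> S" using S by (intro orbit_min) auto
        moreover have "orbit_of {f, g} x \<in> ?O" using \<open>x \<in> S\<close> S by blast
        moreover have "x \<in> orbit_of {f, g} x" by (rule orbit_self)
        ultimately show "x \<in> \<Union>{oo \<in> ?O. oo \<subseteq> S}" by blast
      qed
    qed auto
    moreover have "{oo \<in> ?O. oo \<subseteq> S} \<in> Pow ?O" by blast
    ultimately show "S \<in> Union ` Pow ?O" by (rule image_eqI)
  next
    fix S assume "S \<in> Union ` Pow ?O"
    then obtain U where U: "U \<subseteq> ?O" "S = \<Union>U" by blast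
    have "S \<subseteq> F"
    proof
      fix x assume "x \<in> S"
      then obtain oo where "oo \<in> U" "x \<in> oo" using U by blast
      then obtain y where "y \<in> F" "oo = orbit_of {f, g} y" using U by blast
      then show "x \<in> F" using osub \<open>x \<in> oo\<close> by blast
    qed
    moreover have "\<forall>x\<in>S. f x \<in> S \<and> g x \<in> S"
    proof
      fix x assume "x \<in> S"
      then obtain oo where oo: "oo \<in> U" "x \<in> oo" using U by blast
      then obtain y where y: "y \<in> F" "oo = orbit_of {f, g} y" using U by blast
      have "f x \<in> oo" "g x \<in> oo" using orbit_step[of x "{f,g}" y] oo y by auto
      then show "f x \<in> S \<and> g x \<in> S" using oo U by blast
    qed
    ultimately show "S \<in> ?K" by blast
  qed
  moreover have "inj_on Union (Pow ?O)"
  proof (rule inj_onI)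
    fix U1 U2 assume U: "U1 \<in> Pow ?O" "U2 \<in> Pow ?O" "\<Union>U1 = \<Union>U2"
    have key: "oo \<in> U'" if h: "oo \<in> U" "U \<subseteq> ?O" "U' \<subseteq> ?O" "\<Union>U = \<Union>U'" for oo U U'
    proof -
      have "oo \<in> ?O" using h by blast
      then obtain x where x: "x \<in> F" "oo = orbit_of {f, g} x" by blast
      have "x \<in> oo" using x orbit_self by simp
      then have "x \<in> \<Union>U" using h(1) by blast
      then have "x \<in> \<Union>U'" using h(4) by simp
      then obtain o' where o': "o' \<in> U'" "x \<in> o'" by blast
      then have "o' \<in> ?O" using h by blast
      then obtain y where y: "y \<in> F" "o' = orbit_of {f, g} y" by blast
      have "orbit_of {f, g} x = o'" using orbit_eq[OF y(1) invs] o' y by blast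
      then show ?thesis using x o' by simp
    qed
    have "U1 \<subseteq> ?O" "U2 \<subseteq> ?O" using U(1,2) by auto
    then show "U1 = U2"
    proof (intro equalityI subsetI)
      fix oo assume "oo \<in> U1" then show "oo \<in> U2" using key[of oo U1 U2] U(3) \<open>U1 \<subseteq> ?O\<close> \<open>U2 \<subseteq> ?O\<close> by simp
    next
      fix oo assume "oo \<in> U2" then show "oo \<in> U1" using key[of oo U2 U1] U(3) \<open>U1 \<subseteq> ?O\<close> \<open>U2 \<subseteq> ?O\<close> by simp
    qed
  qed
  ultimately have "card ?K = card (Pow ?O)" by (simp add: card_image)
  then show ?thesis using finO by (simp add: card_Pow)
qed



locale bq =
  fixes B :: "'f rg"
  assumes rg: "ribbon_graph B" and onev: "card (vertices B) = 1" and ne: "flags B \<noteq> {}"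
begin

definition x0 where "x0 = (SOME x. x \<in> flags B)"
definition w where "w k = walk B x0 k"
definition n where "n = card (flags B)"
definition hk :: "nat \<Rightarrow> 'f \<Rightarrow> 'f" where "hk k = (if even k then r2 B else r1 B)"

lemma finF: "finite (flags B)" using rg by (simp add: ribbon_graph_def)

lemma x0_in: "x0 \<in> flags B" unfolding x0_def using ne by (simp add: some_in_eq)

lemma r0F: "y \<in> flags B \<Longrightarrow> r0 B y \<in> flags B" and r0r0: "y \<in> flags B \<Longrightarrow> r0 B (r0 B y) = y"
  and r0ne: "y \<in> flags B \<Longrightarrow> r0 B y \<noteq> y"
  using rg by (auto simp: ribbon_graph_def fpf_invol_def)
lemma r1F: "y \<in> flags B \<Longrightarrow> r1 B y \<in> flags B" and r1r1: "y \<in> flags B \<Longrightarrow> r1 B (r1 B y) = y"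
  and r1ne: "y \<in> flags B \<Longrightarrow> r1 B y \<noteq> y"
  using rg by (auto simp: ribbon_graph_def fpf_invol_def)
lemma r2F: "y \<in> flags B \<Longrightarrow> r2 B y \<in> flags B" and r2r2: "y \<in> flags B \<Longrightarrow> r2 B (r2 B y) = y"
  and r2ne: "y \<in> flags B \<Longrightarrow> r2 B y \<noteq> y"
  using rg by (auto simp: ribbon_graph_def fpf_invol_def)
lemma r02: "y \<in> flags B \<Longrightarrow> r0 B (r2 B y) = r2 B (r0 B y)"
  and r0ne2: "y \<in> flags B \<Longrightarrow> r0 B y \<noteq> r2 B y"
  using rg by (auto simp: ribbon_graph_def)

lemma inv0: "inv_on (flags B) (r0 B)" using r0F r0r0 by (simp add: inv_on_def)
lemma inv1: "inv_on (flags B) (r1 B)" using r1F r1r1 by (simp add: inv_on_def)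
lemma inv2: "inv_on (flags B) (r2 B)" using r2F r2r2 by (simp add: inv_on_def)

lemma orbit_x0: "orbit_of {r1 B, r2 B} x0 = flags B"
proof
  show "orbit_of {r1 B, r2 B} x0 \<subseteq> flags B"
    using x0_in r1F r2F by (intro orbit_sub) auto
  obtain v where v: "vertices B = {v}" using onev by (auto simp: card_Suc_eq)
  have ov: "orbit_of {r1 B, r2 B} y = v" if "y \<in> flags B" for y
  proof -
    have "orbit_of {r1 B, r2 B} y \<in> vertices B" using that by (auto simp: vertices_def)
    then show ?thesis using v by simp
  qed
  show "flags B \<subseteq> orbit_of {r1 B, r2 B} x0"
  proof
    fix y assume y: "y \<in> flags B"
    have "y \<in> orbit_of {r1 B, r2 B} y" by (rule orbit_self)
    then show "y \<in> orbit_of {r1 B, r2 B} x0" using ov[OF y] ov[OF x0_in] by simp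
  qed
qed

lemma w0: "w 0 = x0" by (simp add: w_def)
lemma w_Suc: "w (Suc k) = hk k (w k)" by (simp add: w_def hk_def)
lemma w_F: "w k \<in> flags B"
  by (induction k) (auto simp: w0 x0_in w_Suc hk_def r1F r2F)
lemma hkF: "y \<in> flags B \<Longrightarrow> hk k y \<in> flags B" by (simp add: hk_def r1F r2F)
lemma hk_inv: "y \<in> flags B \<Longrightarrow> hk k (hk k y) = y" by (simp add: hk_def r1r1 r2r2)
lemma hk_ne: "y \<in> flags B \<Longrightarrow> hk k y \<noteq> y" by (simp add: hk_def r1ne r2ne)
lemma w_back: "hk k (w (Suc k)) = w k" by (simp add: w_Suc hk_inv w_F)
lemma hk_par: "even i = even j \<Longrightarrow> hk i = hk j" by (simp add: hk_def)

lemma w_odd_ne: "odd (j - i) \<Longrightarrow> i < j \<Longrightarrow> w i \<noteq> w j"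
proof (induction "j - i" arbitrary: i j rule: less_induct)
  case less
  show ?case
  proof (cases "j = Suc i")
    case True then show ?thesis using hk_ne[OF w_F] w_Suc by metis
  next
    case False
    then have j: "Suc i < j - 1" "j = Suc (j - 1)" using less by (auto simp: odd_pos) presburger+
    have "hk i = hk (j - 1)" using less(2) j by (intro hk_par) presburger
    show ?thesis
    proof
      assume eq: "w i = w j"
      have "w (Suc i) = hk i (w i)" by (rule w_Suc)
      also have "\<dots> = hk (j - 1) (w j)" using eq \<open>hk i = hk (j - 1)\<close> by simp
      also have "\<dots> = w (j - 1)" using w_back[of "j - 1"] j by simp
      finally have "w (Suc i) = w (j - 1)" .
      moreover have "w (Suc i) \<noteq> w (j - 1)"
        using less(1)[of "j - 1" "Suc i"] less(2,3) j by auto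
      ultimately show False by simp
    qed
  qed
qed

lemma w_same: "i \<le> j \<Longrightarrow> w i = w j \<Longrightarrow> w (j - i) = x0"
proof (induction i arbitrary: j)
  case 0 then show ?case by (simp add: w0)
next
  case (Suc i)
  then obtain j' where j': "j = Suc j'" "i \<le> j'" by (cases j) auto
  have "even (j - Suc i)"
  proof (rule ccontr)
    assume "odd (j - Suc i)"
    then have "Suc i < j" by (cases "Suc i = j") auto
    then show False using w_odd_ne[OF \<open>odd (j - Suc i)\<close>] Suc.prems by simp
  qed
  then have "hk i = hk j'" using j' by (intro hk_par) presburger
  have "w i = w j'" using w_back[of i] w_back[of j'] Suc.prems j' \<open>hk i = hk j'\<close> by metis
  then show ?case using Suc.IH[of j'] j' by simp
qed

definition p where "p = (LEAST q. 0 < q \<and> w q = x0)"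

lemma ex_period: "\<exists>q. 0 < q \<and> q \<le> n \<and> w q = x0"
proof -
  have "\<not> inj_on w {..n}"
  proof
    assume "inj_on w {..n}"
    then have "card (w ` {..n}) = Suc n" by (simp add: card_image)
    moreover have "w ` {..n} \<subseteq> flags B" using w_F by auto
    then have "card (w ` {..n}) \<le> n" unfolding n_def using finF by (intro card_mono) auto
    ultimately show False by simp
  qed
  then obtain i j where ij: "i \<le> n" "j \<le> n" "i \<noteq> j" "w i = w j" unfolding inj_on_def by auto
  show ?thesis
  proof (cases "i < j")
    case True then show ?thesis using w_same[of i j] ij by (intro exI[of _ "j - i"]) auto
  next
    case False then show ?thesis using w_same[of j i] ij by (intro exI[of _ "i - j"]) auto
  qed
qed

lemma p_props: "0 < p" "w p = x0" "p \<le> n"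
proof -
  obtain q where q: "0 < q" "q \<le> n" "w q = x0" using ex_period by blast
  have "0 < p \<and> w p = x0" unfolding p_def by (rule LeastI[of _ q]) (use q in simp)
  then show "0 < p" "w p = x0" by auto
  have "p \<le> q" unfolding p_def by (rule Least_le) (use q in simp)
  then show "p \<le> n" using q by simp
qed

lemma p_min: "0 < q \<Longrightarrow> q < p \<Longrightarrow> w q \<noteq> x0"
  unfolding p_def using not_less_Least by blast

lemma p_even: "even p"
  using w_odd_ne[of p 0] p_props by (auto simp: w0)

lemma w_periodic: "w (k + p) = w k"
proof (induction k)
  case 0 then show ?case using p_props by (simp add: w0)
next
  case (Suc k)
  have "hk (k + p) = hk k" using p_even by (intro hk_par) simp
  then show ?case using Suc by (simp add: w_Suc)
qed

lemma w_mult: "w (r + m * p) = w r"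
  by (induction m) (simp_all, metis add.assoc add.commute w_periodic)

lemma w_mod: "w k = w (k mod p)"
  using w_mult[of "k mod p" "k div p"] by simp

lemma w_inj_p: "inj_on w {..<p}"
proof (rule inj_onI)
  fix i j assume ij: "i \<in> {..<p}" "j \<in> {..<p}" "w i = w j"
  show "i = j"
  proof (rule ccontr)
    assume "i \<noteq> j"
    then consider "i < j" | "j < i" by linarith
    then show False
    proof cases
      case 1
      moreover have "j - i < p" using ij 1 by auto
      ultimately show False using w_same[of i j] p_min[of "j - i"] ij by auto
    next
      case 2
      moreover have "i - j < p" using ij 2 by auto
      ultimately show False using w_same[of j i] p_min[of "i - j"] ij by auto
    qed
  qed
qed

lemma range_closed: "y \<in> range w \<Longrightarrow> r1 B y \<in> range w \<and> r2 B y \<in> range w"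
proof -
  assume "y \<in> range w"
  then obtain k where k: "y = w k" by blast
  show ?thesis
  proof (cases "even k")
    case True
    have a: "r2 B y = w (Suc k)" using k True by (simp add: w_Suc hk_def)
    have b: "r1 B y \<in> range w"
    proof (cases k)
      case 0
      have "p = Suc (p - 1)" "odd (p - 1)" using p_props p_even by auto
      then have "w p = r1 B (w (p - 1))" using w_Suc[of "p - 1"] by (simp add: hk_def)
      then have "r1 B x0 = w (p - 1)" using p_props r1r1[OF w_F] by simp
      then show ?thesis using 0 k by (simp add: w0)
    next
      case (Suc k')
      then have "odd k'" using True by simp
      then have "w k = r1 B (w k')" using Suc by (simp add: w_Suc hk_def)
      then show ?thesis using k r1r1[OF w_F] by simp
    qed
    show ?thesis using a b by simp
  next
    case False
    have a: "r1 B y = w (Suc k)" using k False by (simp add: w_Suc hk_def)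
    obtain k' where "k = Suc k'" "even k'" using False by (cases k) auto
    then have "w k = r2 B (w k')" by (simp add: w_Suc hk_def)
    then have "r2 B y = w k'" using k r2r2[OF w_F] by simp
    then show ?thesis using a by simp
  qed
qed

lemma range_w: "range w = flags B"
proof
  show "range w \<subseteq> flags B" using w_F by auto
  have "orbit_of {r1 B, r2 B} x0 \<subseteq> range w"
    by (rule orbit_min) (use range_closed w0 in \<open>auto, metis rangeI\<close>)
  then show "flags B \<subseteq> range w" using orbit_x0 by simp
qed

lemma img_p: "w ` {..<p} = flags B"
proof -
  have "range w \<subseteq> w ` {..<p}"
  proof
    fix y assume "y \<in> range w"
    then obtain k where "y = w k" by blast
    then have "y = w (k mod p)" using w_mod by simp
    moreover have "k mod p < p" using p_props by simp
    ultimately show "y \<in> w ` {..<p}" by blast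
  qed
  then show ?thesis using range_w by auto
qed

lemma p_n: "p = n"
  using card_image[OF w_inj_p] img_p by (simp add: n_def)

lemma n_pos: "0 < n" and n_even: "even n"
  using p_n p_props p_even by auto

lemma w_n: "w n = x0" using p_n p_props by simp
lemma w_inj: "inj_on w {..<n}" using w_inj_p p_n by simp
lemma img_n: "w ` {..<n} = flags B" using img_p p_n by simp
lemma w_modn: "w k = w (k mod n)" using w_mod p_n by simp

lemma pos_eq: "pos B y = (LEAST k. w k = y)"
  by (simp add: pos_def w_def x0_def)

lemma pos_w: "k < n \<Longrightarrow> pos B (w k) = k"
  unfolding pos_eq
proof (rule Least_equality)
  fix j assume "k < n" "w j = w k"
  moreover have "j mod n < n" using n_pos by simp
  ultimately have "j mod n = k" using w_inj w_modn[of j] by (auto dest: inj_onD)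
  then show "k \<le> j" by (metis mod_less_eq_dividend)
qed simp

lemma pos_lt: "y \<in> flags B \<Longrightarrow> pos B y < n" and w_pos: "y \<in> flags B \<Longrightarrow> w (pos B y) = y"
proof -
  assume "y \<in> flags B"
  then obtain k where "k < n" "y = w k" using img_n by auto
  then show "pos B y < n" "w (pos B y) = y" using pos_w by auto
qed

lemma pos_inj: "y \<in> flags B \<Longrightarrow> z \<in> flags B \<Longrightarrow> pos B y = pos B z \<Longrightarrow> y = z"
  using w_pos by metis

lemma pos_x0: "pos B x0 = 0" using pos_w[of 0] n_pos by (simp add: w0)

lemma pos_r2: "y \<in> flags B \<Longrightarrow> pos B (r2 B y) = (if even (pos B y) then pos B y + 1 else pos B y - 1)"
proof -
  assume y: "y \<in> flags B"
  define k where "k = pos B y"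
  have k: "k < n" "w k = y" using pos_lt[OF y] w_pos[OF y] k_def by auto
  show ?thesis
  proof (cases "even k")
    case True
    then have "k + 1 < n" using k n_even by (metis Suc_eq_plus1 Suc_lessI even_Suc)
    moreover have "r2 B y = w (k + 1)" using True k by (simp add: w_Suc hk_def)
    ultimately show ?thesis using True k_def pos_w by simp
  next
    case False
    obtain k' where k': "k = Suc k'" "even k'" using False by (cases k) auto
    then have "y = r2 B (w k')" using k by (simp add: w_Suc hk_def)
    then have "r2 B y = w k'" using r2r2[OF w_F] by simp
    then show ?thesis using False k_def k' pos_w k by simp
  qed
qed

lemma pos_r1_odd: "y \<in> flags B \<Longrightarrow> odd (pos B y) \<Longrightarrow>
   pos B (r1 B y) = (if pos B y + 1 = n then 0 else pos B y + 1)"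
proof -
  assume y: "y \<in> flags B" and o: "odd (pos B y)"
  define k where "k = pos B y"
  have k: "k < n" "w k = y" using pos_lt[OF y] w_pos[OF y] k_def by auto
  have "r1 B y = w (k + 1)" using o k k_def by (simp add: w_Suc hk_def)
  then show ?thesis using k k_def pos_w w_n pos_x0 by auto
qed

lemma pos_r1_even: "y \<in> flags B \<Longrightarrow> even (pos B y) \<Longrightarrow> odd (pos B (r1 B y))"
proof -
  assume y: "y \<in> flags B" and e: "even (pos B y)"
  define k where "k = pos B y"
  have k: "k < n" "w k = y" using pos_lt[OF y] w_pos[OF y] k_def by auto
  show ?thesis
  proof (cases k)
    case 0
    have "n = Suc (n - 1)" "odd (n - 1)" using n_pos n_even by auto
    then have "w n = r1 B (w (n - 1))" using w_Suc[of "n - 1"] by (simp add: hk_def)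
    then have "r1 B y = w (n - 1)" using w_n k 0 r1r1[OF w_F, of "n - 1"] by (simp add: w0)
    then show ?thesis using pos_w[of "n - 1"] n_pos \<open>odd (n - 1)\<close> by simp
  next
    case (Suc k')
    then have "odd k'" using e k_def by simp
    then have "y = r1 B (w k')" using k Suc by (simp add: w_Suc hk_def)
    then have "r1 B y = w k'" using r1r1[OF w_F] by simp
    then show ?thesis using pos_w[of k'] Suc k \<open>odd k'\<close> by simp
  qed
qed

lemma same_end: "y \<in> flags B \<Longrightarrow> z \<in> flags B \<Longrightarrow> pos B z div 2 = pos B y div 2 \<Longrightarrow> z = y \<or> z = r2 B y"
proof -
  assume y: "y \<in> flags B" and z: "z \<in> flags B" and d: "pos B z div 2 = pos B y div 2"
  show ?thesis
  proof (cases "pos B z = pos B y")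
    case True then show ?thesis using pos_inj y z by blast
  next
    case False
    then have "pos B z = pos B (r2 B y)" using pos_r2[OF y] d by auto presburger+
    then show ?thesis using pos_inj[OF z r2F[OF y]] by blast
  qed
qed

end


lemma arith_il:
  fixes a b c d px pz :: nat
  assumes "a \<noteq> b" "c \<noteq> d" "c \<noteq> a" "c \<noteq> b" "d \<noteq> a" "d \<noteq> b" "px div 2 = a" "pz div 2 = b"
  shows "even ((if 2*c < px then 1 else 0) + (if 2*d < px then 1 else 0)
             + (if 2*c < pz then 1 else 0) + (if 2*d < pz then 1 else 0) :: nat) \<longleftrightarrow>
    \<not> (\<exists>p1\<in>{a,b}. \<exists>p2\<in>{a,b}. \<exists>q1\<in>{c,d}. \<exists>q2\<in>{c,d}.
        (p1 < q1 \<and> q1 < p2 \<and> p2 < q2) \<or> (q1 < p1 \<and> p1 < q2 \<and> q2 < p2))"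
proof -
  have i1: "(2*c < px) = (c < a)" "(2*d < px) = (d < a)" "(2*c < pz) = (c < b)" "(2*d < pz) = (d < b)"
    using assms by auto
  show ?thesis unfolding i1 using assms(1-6)
    by (cases "a < b"; cases "c < d"; cases "c < a"; cases "c < b"; cases "d < a"; cases "d < b"; simp)
qed

lemma arith_self:
  fixes a b px pz :: nat
  assumes "a \<noteq> b" "px div 2 = a" "pz div 2 = b"
  shows "even ((if 2*a < px then 1 else 0) + (if 2*b < px then 1 else 0)
             + (if 2*a < pz then 1 else 0) + (if 2*b < pz then 1 else 0) :: nat) \<longleftrightarrow>
    (even px \<noteq> even pz)"
proof -
  have "(2*a < px) = odd px" "(2*b < pz) = odd pz" using assms(2,3) by presburger+
  moreover have "(2*b < px) = (b < a)" "(2*a < pz) = (a < b)" using assms by auto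
  ultimately show ?thesis using assms(1) by (cases "a < b") auto
qed

context bq begin

definition eo where "eo y = orbit_of {r0 B, r2 B} y"

lemma eo4: "y \<in> flags B \<Longrightarrow> eo y = {y, r0 B y, r2 B y, r0 B (r2 B y)}"
proof
  assume y: "y \<in> flags B"
  show "eo y \<subseteq> {y, r0 B y, r2 B y, r0 B (r2 B y)}"
    unfolding eo_def
  proof (rule orbit_min)
    fix z h assume z: "z \<in> {y, r0 B y, r2 B y, r0 B (r2 B y)}" and h: "h \<in> {r0 B, r2 B}"
    have a: "r2 B (r0 B y) = r0 B (r2 B y)" using r02[OF y] by simp
    have b: "r2 B (r0 B (r2 B y)) = r0 B y" using r02[OF r2F[OF y]] r2r2[OF y] by simp
    show "h z \<in> {y, r0 B y, r2 B y, r0 B (r2 B y)}"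
      using z h a b r0r0[OF y] r0r0[OF r2F[OF y]] r2r2[OF y] by auto
  qed simp
  show "{y, r0 B y, r2 B y, r0 B (r2 B y)} \<subseteq> eo y"
    unfolding eo_def using orbit_self[of y] orbit_step[of y "{r0 B, r2 B}" y]
      orbit_step[of "r2 B y" "{r0 B, r2 B}" y] by auto
qed

lemma eo_self: "y \<in> eo y" unfolding eo_def by (rule orbit_self)

lemma eoF: "y \<in> flags B \<Longrightarrow> eo y \<subseteq> flags B"
  using eo4 r0F r2F by auto

lemma edges_eq: "edges B = eo ` flags B"
  by (auto simp: edges_def eo_def)

lemma eo_in: "y \<in> flags B \<Longrightarrow> eo y \<in> edges B"
  using edges_eq by auto

lemma edge_unique: "e \<in> edges B \<Longrightarrow> y \<in> e \<Longrightarrow> e = eo y"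
proof -
  assume e: "e \<in> edges B" and y: "y \<in> e"
  then obtain x where x: "x \<in> flags B" "e = eo x" using edges_eq by auto
  have "orbit_of {r0 B, r2 B} y = orbit_of {r0 B, r2 B} x"
    using orbit_eq[OF x(1), of "{r0 B, r2 B}" y] inv0 inv2 y x by (auto simp: eo_def)
  then show ?thesis using x by (simp add: eo_def)
qed

lemma edge_sub: "e \<in> edges B \<Longrightarrow> e \<subseteq> flags B"
  using edges_eq eoF by auto

lemma finE: "finite (edges B)" using edges_eq finF by simp

lemma edge_ne: "e \<in> edges B \<Longrightarrow> e \<noteq> {}"
  using edges_eq eo_self by auto

lemma eo_r0: "y \<in> flags B \<Longrightarrow> eo (r0 B y) = eo y"
  using edge_unique[OF eo_in, of y "r0 B y"] eo4 by auto
lemma eo_r2: "y \<in> flags B \<Longrightarrow> eo (r2 B y) = eo y"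
  using edge_unique[OF eo_in, of y "r2 B y"] eo4 by auto

lemma edge_r0: "e \<in> edges B \<Longrightarrow> y \<in> e \<Longrightarrow> r0 B y \<in> e"
  using edge_unique eo4 edge_sub by blast
lemma edge_r2: "e \<in> edges B \<Longrightarrow> y \<in> e \<Longrightarrow> r2 B y \<in> e"
  using edge_unique eo4 edge_sub by blast

lemma pos_r2_div: "y \<in> flags B \<Longrightarrow> pos B (r2 B y) div 2 = pos B y div 2"
  using pos_r2 by auto presburger

lemma pos_r2_par: "y \<in> flags B \<Longrightarrow> even (pos B (r2 B y)) = odd (pos B y)"
  using pos_r2 by auto

lemma ends: "y \<in> flags B \<Longrightarrow> end_pos B (eo y) = {pos B y div 2, pos B (r0 B y) div 2}"
proof -
  assume y: "y \<in> flags B"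
  have "pos B (r0 B (r2 B y)) div 2 = pos B (r0 B y) div 2"
    using r02[OF y] pos_r2_div[OF r0F[OF y]] by simp
  then show ?thesis using eo4[OF y] pos_r2_div[OF y] by (auto simp: end_pos_def)
qed

lemma ends_ne: "y \<in> flags B \<Longrightarrow> pos B (r0 B y) div 2 \<noteq> pos B y div 2"
  using same_end[of y "r0 B y"] r0F r0ne r0ne2 by auto

lemma end_mem: "e \<in> edges B \<Longrightarrow> y \<in> flags B \<Longrightarrow> (pos B y div 2 \<in> end_pos B e) = (y \<in> e)"
proof
  assume e: "e \<in> edges B" and y: "y \<in> flags B" and i: "pos B y div 2 \<in> end_pos B e"
  then obtain z where z: "z \<in> e" "pos B y div 2 = pos B z div 2" by (auto simp: end_pos_def)
  then have "y = z \<or> y = r2 B z" using same_end[of z y] edge_sub[OF e] y by auto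
  then show "y \<in> e" using z edge_r2[OF e] by auto
qed (auto simp: end_pos_def)

lemma ends_disj: "e \<in> edges B \<Longrightarrow> f \<in> edges B \<Longrightarrow> e \<noteq> f \<Longrightarrow> i \<in> end_pos B e \<Longrightarrow> i \<notin> end_pos B f"
proof
  assume e: "e \<in> edges B" and f: "f \<in> edges B" and ne: "e \<noteq> f" and ie: "i \<in> end_pos B e" and iff: "i \<in> end_pos B f"
  then obtain y where y: "y \<in> e" "i = pos B y div 2" by (auto simp: end_pos_def)
  then have "y \<in> f" using end_mem[OF f] edge_sub[OF e] iff by auto
  then show False using edge_unique[OF e y(1)] edge_unique[OF f] ne by auto
qed

definition ind :: "'f set \<Rightarrow> nat \<Rightarrow> nat" where
  "ind f k = card {i \<in> end_pos B f. 2 * i < k}"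

lemma ind_formula: "y \<in> flags B \<Longrightarrow>
  ind (eo y) k = (if 2 * (pos B y div 2) < k then 1 else 0) + (if 2 * (pos B (r0 B y) div 2) < k then 1 else 0)"
proof -
  assume y: "y \<in> flags B"
  define a where "a = pos B y div 2"
  define b where "b = pos B (r0 B y) div 2"
  have ab: "a \<noteq> b" using ends_ne[OF y] a_def b_def by simp
  have "ind (eo y) k = card {i \<in> {a, b}. 2 * i < k}" unfolding ind_def using ends[OF y] a_def b_def by simp
  also have "\<dots> = (if 2*a<k then 1 else 0) + (if 2*b < k then 1 else 0)"
  proof (cases "2*a<k"; cases "2*b<k")
    assume "2*a<k" "2*b<k" then have "{i \<in> {a, b}. 2 * i < k} = {a, b}" by auto
    then show ?thesis using ab \<open>2*a<k\<close> \<open>2*b<k\<close> by simp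
  next
    assume "2*a<k" "\<not> 2*b<k" then have "{i \<in> {a, b}. 2 * i < k} = {a}" by auto
    then show ?thesis using \<open>2*a<k\<close> \<open>\<not> 2*b<k\<close> by simp
  next
    assume "\<not> 2*a<k" "2*b<k" then have "{i \<in> {a, b}. 2 * i < k} = {b}" by auto
    then show ?thesis using \<open>\<not> 2*a<k\<close> \<open>2*b<k\<close> by simp
  next
    assume "\<not> 2*a<k" "\<not> 2*b<k" then have "{i \<in> {a, b}. 2 * i < k} = {}" by auto
    then show ?thesis using \<open>\<not> 2*a<k\<close> \<open>\<not> 2*b<k\<close> by simp
  qed
  finally show ?thesis using a_def b_def by simp
qed

lemma edge_rep: "e \<in> edges B \<Longrightarrow> \<exists>y\<in>flags B. e = eo y" using edges_eq by auto

lemma ind_0: "e \<in> edges B \<Longrightarrow> ind e 0 = 0" by (simp add: ind_def)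

lemma ind_last: "e \<in> edges B \<Longrightarrow> ind e (n - 1) = 2"
proof -
  assume "e \<in> edges B"
  then obtain y where y: "y \<in> flags B" "e = eo y" using edge_rep by blast
  have "pos B y < n" "pos B (r0 B y) < n" using pos_lt y r0F by auto
  then have "2 * (pos B y div 2) < n - 1" "2 * (pos B (r0 B y) div 2) < n - 1" using n_even by auto presburger+
  then show ?thesis using ind_formula[OF y(1)] y by simp
qed

lemma ind_odd_step: "e \<in> edges B \<Longrightarrow> odd k \<Longrightarrow> ind e (Suc k) = ind e k"
proof -
  assume "e \<in> edges B" "odd k"
  then obtain y where y: "y \<in> flags B" "e = eo y" using edge_rep by blast
  have "\<And>j. (2 * j < Suc k) = (2 * j < k)" using \<open>odd k\<close> by presburger
  then show ?thesis using ind_formula[OF y(1)] y by simp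
qed

lemma ind_even_step: "e \<in> edges B \<Longrightarrow> y \<in> flags B \<Longrightarrow> even (pos B y) \<Longrightarrow>
   ind e (Suc (pos B y)) = ind e (pos B y) + (if y \<in> e then 1 else 0)"
proof -
  assume e: "e \<in> edges B" and yF: "y \<in> flags B" and ev: "even (pos B y)"
  then obtain x where x: "x \<in> flags B" "e = eo x" using edge_rep by blast
  define a where "a = pos B x div 2"
  define b where "b = pos B (r0 B x) div 2"
  define j where "j = pos B y div 2"
  have ab: "a \<noteq> b" using ends_ne[OF x(1)] a_def b_def by simp
  have "(y \<in> e) = (j \<in> end_pos B e)" using end_mem[OF e yF] j_def by simp
  also have "\<dots> = (j = a \<or> j = b)" using ends[OF x(1)] x a_def b_def by simp
  finally have ye: "(y \<in> e) = (j = a \<or> j = b)" .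
  have pj: "pos B y = 2 * j" using ev j_def by simp
  have "\<And>i. (2 * i < Suc (2 * j)) = (2 * i < 2 * j \<or> i = j)" by auto
  then show ?thesis using ind_formula[OF x(1)] x ye pj ab a_def[symmetric] b_def[symmetric] by auto
qed

lemma ind_par_other:
  assumes e: "e \<in> edges B" and f: "f \<in> edges B" and ef: "e \<noteq> f"
    and x: "x \<in> e" and z: "z \<in> e" and xz: "pos B z div 2 \<noteq> pos B x div 2"
  shows "even (ind f (pos B x) + ind f (pos B z)) = (\<not> interlaced B e f)"
proof -
  obtain y where y: "y \<in> flags B" "f = eo y" using edge_rep f by blast
  define a where "a = pos B x div 2"
  define b where "b = pos B z div 2"
  define c where "c = pos B y div 2"
  define d where "d = pos B (r0 B y) div 2"
  have xF: "x \<in> flags B" and zF: "z \<in> flags B" using x z edge_sub e by auto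
  obtain y' where y': "y' \<in> flags B" "e = eo y'" using edge_rep e by blast
  have "end_pos B e = {pos B y' div 2, pos B (r0 B y') div 2}" using ends y' by simp
  moreover have "a \<in> end_pos B e" "b \<in> end_pos B e" using x z a_def b_def by (auto simp: end_pos_def)
  moreover have "a \<noteq> b" using xz a_def b_def by simp
  ultimately have Ee: "end_pos B e = {a, b}" by auto
  have Ef: "end_pos B f = {c, d}" using ends y c_def d_def by simp
  have cd: "c \<noteq> d" using ends_ne[OF y(1)] c_def d_def by simp
  have disj: "c \<noteq> a" "c \<noteq> b" "d \<noteq> a" "d \<noteq> b"
    using ends_disj[OF e f ef] Ee Ef by auto
  have "even (ind f (pos B x) + ind f (pos B z)) =
     even ((if 2*c < pos B x then 1 else 0) + (if 2*d < pos B x then 1 else 0)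
             + (if 2*c < pos B z then 1 else 0) + (if 2*d < pos B z then 1 else 0) :: nat)"
    using ind_formula[OF y(1)] y c_def[symmetric] d_def[symmetric] by (simp add: algebra_simps)
  also have "\<dots> = (\<not> (\<exists>p1\<in>{a,b}. \<exists>p2\<in>{a,b}. \<exists>q1\<in>{c,d}. \<exists>q2\<in>{c,d}.
        (p1 < q1 \<and> q1 < p2 \<and> p2 < q2) \<or> (q1 < p1 \<and> p1 < q2 \<and> q2 < p2)))"
    using arith_il[OF \<open>a \<noteq> b\<close> cd disj a_def[symmetric] b_def[symmetric]] .
  also have "\<dots> = (\<not> interlaced B e f)"
    unfolding interlaced_def Ee Ef using ef by simp
  finally show ?thesis .
qed

lemma ind_par_self:
  assumes e: "e \<in> edges B" and x: "x \<in> e" and z: "z \<in> e" and xz: "pos B z div 2 \<noteq> pos B x div 2"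
  shows "even (ind e (pos B x) + ind e (pos B z)) = (even (pos B x) \<noteq> even (pos B z))"
proof -
  define a where "a = pos B x div 2"
  define b where "b = pos B z div 2"
  have xF: "x \<in> flags B" using x e edge_sub by auto
  have ee: "e = eo x" using edge_unique[OF e x] .
  have "end_pos B e = {pos B x div 2, pos B (r0 B x) div 2}" using ends xF ee by simp
  moreover have "b \<in> end_pos B e" using z b_def by (auto simp: end_pos_def)
  moreover have "a \<noteq> b" using xz a_def b_def by simp
  ultimately have "pos B (r0 B x) div 2 = b" using a_def by auto
  then have "even (ind e (pos B x) + ind e (pos B z)) =
     even ((if 2*a < pos B x then 1 else 0) + (if 2*b < pos B x then 1 else 0)
             + (if 2*a < pos B z then 1 else 0) + (if 2*b < pos B z then 1 else 0) :: nat)"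
    using ind_formula[OF xF] ee a_def by (simp add: algebra_simps)
  also have "\<dots> = (even (pos B x) \<noteq> even (pos B z))"
    using arith_self[OF \<open>a \<noteq> b\<close> a_def[symmetric] b_def[symmetric]] .
  finally show ?thesis .
qed

end


lemma even_sum_card:
  assumes "finite T"
  shows "even (\<Sum>f\<in>T. g f :: nat) = even (card {f\<in>T. odd (g f)})"
  using assms
proof (induction T rule: finite_induct)
  case empty then show ?case by simp
next
  case (insert a T)
  have "{f \<in> insert a T. odd (g f)} = (if odd (g a) then insert a {f\<in>T. odd (g f)} else {f\<in>T. odd (g f)})"
    by auto
  moreover have "a \<notin> {f\<in>T. odd (g f)}" using insert by simp
  moreover have "finite {f\<in>T. odd (g f)}" using insert by simp
  ultimately show ?case using insert by auto
qed

context bq begin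

definition sig :: "('f set \<Rightarrow> nat) \<Rightarrow> 'f \<Rightarrow> 'f" where
  "sig lab x = (if lab (eo x) = 1 then r0 B x else if lab (eo x) = 2 then r0 B (r2 B x) else r2 B x)"
definition nonD :: "('f set \<Rightarrow> nat) \<Rightarrow> 'f set \<Rightarrow> bool" where
  "nonD lab e \<longleftrightarrow> lab e = 1 \<or> lab e = 2"
definition Xt :: "('f set \<Rightarrow> nat) \<Rightarrow> 'f set \<Rightarrow> bool" where
  "Xt lab e \<longleftrightarrow> (lab e = 1 \<and> \<not> orientable_loop B e) \<or> (lab e = 2 \<and> orientable_loop B e)"
definition Valid :: "('f set \<Rightarrow> nat) \<Rightarrow> 'f set set set" where
  "Valid lab = {T. T \<subseteq> {e \<in> edges B. nonD lab e} \<and> (\<forall>e\<in>edges B. nonD lab e \<longrightarrow>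
      even (card {f\<in>T. interlaced B e f} + (if e \<in> T \<and> Xt lab e then 1 else 0)))}"
definition Kc :: "('f set \<Rightarrow> nat) \<Rightarrow> 'f set set" where
  "Kc lab = {S. S \<subseteq> flags B \<and> (\<forall>x\<in>S. r1 B x \<in> S \<and> sig lab x \<in> S)}"
definition Tof :: "'f set \<Rightarrow> 'f set set" where
  "Tof S = {e \<in> edges B. \<exists>x\<in>e. (x \<in> S) \<noteq> (r2 B x \<in> S)}"
definition cnt :: "'f set set \<Rightarrow> nat \<Rightarrow> nat" where
  "cnt T k = (\<Sum>f\<in>T. ind f k)"
definition ST :: "'f set set \<Rightarrow> 'f set" where
  "ST T = {x \<in> flags B. odd (cnt T (pos B x))}"

lemma orient_unif: "x \<in> flags B \<Longrightarrow> orientable_loop B (eo x) = (even (pos B x) = odd (pos B (r0 B x)))"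
proof -
  assume x: "x \<in> flags B"
  have a: "even (pos B (r2 B x)) = odd (pos B x)" using pos_r2_par[OF x] .
  have b: "even (pos B (r0 B (r2 B x))) = odd (pos B (r0 B x))"
    using pos_r2_par[OF r0F[OF x]] r02[OF x] by simp
  have c: "r0 B (r0 B (r2 B x)) = r2 B x" using r0r0[OF r2F[OF x]] .
  show ?thesis unfolding orientable_loop_def eo4[OF x] using a b c r0r0[OF x] by auto
qed

lemma sigF: "x \<in> flags B \<Longrightarrow> sig lab x \<in> flags B"
  by (simp add: sig_def r0F r2F)

lemma sig_eo: "x \<in> flags B \<Longrightarrow> eo (sig lab x) = eo x"
  by (simp add: sig_def eo_r0 eo_r2 r2F)

lemma sig_inv: "x \<in> flags B \<Longrightarrow> sig lab (sig lab x) = x"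
proof -
  assume x: "x \<in> flags B"
  have e: "eo (sig lab x) = eo x" using sig_eo[OF x] .
  have "r0 B (r2 B (r0 B (r2 B x))) = x"
    using r02[OF r2F[OF x]] r2r2[OF x] r0r0[OF x] by simp
  then show ?thesis using e x unfolding sig_def by (auto simp: r0r0 r2r2 eo_r0 eo_r2 r2F)
qed

lemma inv_sig: "inv_on (flags B) (sig lab)" using sigF sig_inv by (simp add: inv_on_def)

lemma sig_D: "\<not> nonD lab (eo x) \<Longrightarrow> sig lab x = r2 B x"
  by (simp add: sig_def nonD_def)

lemma sig_r2: "x \<in> flags B \<Longrightarrow> nonD lab (eo x) \<Longrightarrow> r2 B (sig lab x) = sig lab (r2 B x)"
proof -
  assume x: "x \<in> flags B" and nd: "nonD lab (eo x)"
  have "r2 B (r0 B (r2 B x)) = r0 B x" using r02[OF r2F[OF x]] r2r2[OF x] by simp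
  then show ?thesis using nd x r02[OF x] unfolding sig_def nonD_def by (auto simp: eo_r2 r2r2)
qed

lemma sig_end: "x \<in> flags B \<Longrightarrow> nonD lab (eo x) \<Longrightarrow> pos B (sig lab x) div 2 \<noteq> pos B x div 2"
proof -
  assume x: "x \<in> flags B" and nd: "nonD lab (eo x)"
  have "pos B (r0 B (r2 B x)) div 2 = pos B (r0 B x) div 2"
    using r02[OF x] pos_r2_div[OF r0F[OF x]] by simp
  then show ?thesis using nd ends_ne[OF x] unfolding sig_def nonD_def by auto
qed

lemma sig_side: "x \<in> flags B \<Longrightarrow> nonD lab (eo x) \<Longrightarrow>
   (even (pos B x) = even (pos B (sig lab x))) = Xt lab (eo x)"
proof -
  assume x: "x \<in> flags B" and nd: "nonD lab (eo x)"
  have "even (pos B (r0 B (r2 B x))) = odd (pos B (r0 B x))"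
    using pos_r2_par[OF r0F[OF x]] r02[OF x] by simp
  then show ?thesis using nd orient_unif[OF x] unfolding sig_def nonD_def Xt_def by auto
qed

lemma sig_edge: "x \<in> flags B \<Longrightarrow> nonD lab (eo x) \<Longrightarrow> eo x \<subseteq> {x, r2 B x, sig lab x, r2 B (sig lab x)}"
proof -
  assume x: "x \<in> flags B" and nd: "nonD lab (eo x)"
  have "r2 B (r0 B (r2 B x)) = r0 B x" using r02[OF r2F[OF x]] r2r2[OF x] by simp
  then show ?thesis using nd eo4[OF x] r02[OF x] unfolding sig_def nonD_def by auto
qed

lemma closed_iff: "inv_on (flags B) h \<Longrightarrow> S \<subseteq> flags B \<Longrightarrow> (\<forall>x\<in>S. h x \<in> S) \<Longrightarrow> y \<in> flags B \<Longrightarrow> (h y \<in> S) = (y \<in> S)"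
  unfolding inv_on_def by metis

lemma K_sig: "S \<in> Kc lab \<Longrightarrow> y \<in> flags B \<Longrightarrow> (sig lab y \<in> S) = (y \<in> S)"
  using closed_iff[OF inv_sig] unfolding Kc_def by blast
lemma K_r1: "S \<in> Kc lab \<Longrightarrow> y \<in> flags B \<Longrightarrow> (r1 B y \<in> S) = (y \<in> S)"
  using closed_iff[OF inv1] unfolding Kc_def by blast

lemma change_D: "S \<in> Kc lab \<Longrightarrow> x \<in> flags B \<Longrightarrow> \<not> nonD lab (eo x) \<Longrightarrow> (r2 B x \<in> S) = (x \<in> S)"
  using K_sig[of S lab x] sig_D[of lab x] by simp

lemma change_uni: "S \<in> Kc lab \<Longrightarrow> x \<in> flags B \<Longrightarrow> y \<in> eo x \<Longrightarrow>
  ((y \<in> S) \<noteq> (r2 B y \<in> S)) = ((x \<in> S) \<noteq> (r2 B x \<in> S))"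
proof -
  assume S: "S \<in> Kc lab" and x: "x \<in> flags B" and y: "y \<in> eo x"
  have yF: "y \<in> flags B" using y eoF[OF x] by auto
  have ey: "eo y = eo x" using edge_unique[OF eo_in[OF x] y] by simp
  show ?thesis
  proof (cases "nonD lab (eo x)")
    case False
    then show ?thesis using change_D[OF S x] change_D[OF S yF] ey by simp
  next
    case True
    have "y \<in> {x, r2 B x, sig lab x, r2 B (sig lab x)}" using sig_edge[OF x True] y by blast
    moreover have "(sig lab x \<in> S) = (x \<in> S)" using K_sig[OF S x] .
    moreover have "(r2 B (sig lab x) \<in> S) = (r2 B x \<in> S)"
      using K_sig[OF S r2F[OF x]] sig_r2[OF x True] by simp
    moreover have "r2 B (r2 B x) = x" "r2 B (r2 B (sig lab x)) = sig lab x" using r2r2 x sigF by auto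
    ultimately show ?thesis by auto
  qed
qed

lemma Tof_iff: "S \<in> Kc lab \<Longrightarrow> x \<in> flags B \<Longrightarrow> (eo x \<in> Tof S) = ((x \<in> S) \<noteq> (r2 B x \<in> S))"
proof
  assume S: "S \<in> Kc lab" and x: "x \<in> flags B"
  show "(x \<in> S) \<noteq> (r2 B x \<in> S) \<Longrightarrow> eo x \<in> Tof S" using eo_in[OF x] eo_self[of x] by (auto simp: Tof_def)
  assume "eo x \<in> Tof S"
  then obtain y where "y \<in> eo x" "(y \<in> S) \<noteq> (r2 B y \<in> S)" by (auto simp: Tof_def)
  then show "(x \<in> S) \<noteq> (r2 B x \<in> S)" using change_uni[OF S x] by blast
qed

lemma Tof_sub: "S \<in> Kc lab \<Longrightarrow> Tof S \<subseteq> {e \<in> edges B. nonD lab e}"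
proof
  fix e assume S: "S \<in> Kc lab" and e: "e \<in> Tof S"
  then have eE: "e \<in> edges B" by (simp add: Tof_def)
  obtain x where x: "x \<in> e" "(x \<in> S) \<noteq> (r2 B x \<in> S)" using e by (auto simp: Tof_def)
  have xF: "x \<in> flags B" using x edge_sub[OF eE] by auto
  have "e = eo x" using edge_unique[OF eE x(1)] .
  then have "nonD lab e" using change_D[OF S xF] x by auto
  then show "e \<in> {e \<in> edges B. nonD lab e}" using eE by simp
qed

lemma cnt_0: "cnt T 0 = 0" by (simp add: cnt_def ind_def)

lemma cnt_last: "T \<subseteq> edges B \<Longrightarrow> cnt T (n - 1) = 2 * card T"
  unfolding cnt_def using ind_last by (simp add: subset_iff)

lemma cnt_odd: "T \<subseteq> edges B \<Longrightarrow> odd k \<Longrightarrow> cnt T (Suc k) = cnt T k"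
  unfolding cnt_def using ind_odd_step by (intro sum.cong) auto

lemma cnt_even: "T \<subseteq> edges B \<Longrightarrow> y \<in> flags B \<Longrightarrow> even (pos B y) \<Longrightarrow>
   cnt T (Suc (pos B y)) = cnt T (pos B y) + (if eo y \<in> T then 1 else 0)"
proof -
  assume T: "T \<subseteq> edges B" and y: "y \<in> flags B" and ev: "even (pos B y)"
  have fin: "finite T" using T finE finite_subset by blast
  have "cnt T (Suc (pos B y)) = (\<Sum>f\<in>T. ind f (pos B y) + (if y \<in> f then 1 else 0))"
    unfolding cnt_def using ind_even_step[OF _ y ev] T by (intro sum.cong) auto
  also have "\<dots> = cnt T (pos B y) + (\<Sum>f\<in>T. (if y \<in> f then 1 else 0))"
    by (simp add: sum.distrib cnt_def)
  also have "(\<Sum>f\<in>T. (if y \<in> f then 1 else 0)) = card {f\<in>T. y \<in> f}"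
    using fin by (simp add: sum.If_cases Int_def)
  also have "{f\<in>T. y \<in> f} = (if eo y \<in> T then {eo y} else {})"
    using T edge_unique eo_self by auto
  finally show ?thesis by simp
qed

lemma cnt_r2: "T \<subseteq> edges B \<Longrightarrow> y \<in> flags B \<Longrightarrow>
   odd (cnt T (pos B (r2 B y))) = (odd (cnt T (pos B y)) \<noteq> (eo y \<in> T))"
proof -
  assume T: "T \<subseteq> edges B" and y: "y \<in> flags B"
  show ?thesis
  proof (cases "even (pos B y)")
    case True
    then show ?thesis using cnt_even[OF T y True] pos_r2[OF y] by simp
  next
    case False
    have y2: "r2 B y \<in> flags B" "even (pos B (r2 B y))" using r2F[OF y] pos_r2_par[OF y] False by auto
    have "pos B y = Suc (pos B (r2 B y))" using pos_r2[OF y] False by simp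
    then show ?thesis using cnt_even[OF T y2] eo_r2[OF y] by simp
  qed
qed

lemma cnt_r1: "T \<subseteq> edges B \<Longrightarrow> y \<in> flags B \<Longrightarrow>
   odd (cnt T (pos B (r1 B y))) = odd (cnt T (pos B y))"
proof -
  assume T: "T \<subseteq> edges B"
  have oddcase: "odd (cnt T (pos B (r1 B u))) = odd (cnt T (pos B u))" if u: "u \<in> flags B" "odd (pos B u)" for u
  proof (cases "pos B u + 1 = n")
    case True
    then have "pos B u = n - 1" by simp
    then show ?thesis using pos_r1_odd[OF u] True cnt_last[OF T] cnt_0 by simp
  next
    case False
    then show ?thesis using pos_r1_odd[OF u] cnt_odd[OF T u(2)] by simp
  qed
  assume y: "y \<in> flags B"
  show ?thesis
  proof (cases "odd (pos B y)")
    case True then show ?thesis using oddcase[OF y] by simp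
  next
    case False
    then have "odd (pos B (r1 B y))" using pos_r1_even[OF y] by simp
    then show ?thesis using oddcase[OF r1F[OF y]] r1r1[OF y] by simp
  qed
qed

lemma cnt_par:
  assumes T: "T \<subseteq> edges B" and e: "e \<in> edges B" and x: "x \<in> e" and z: "z \<in> e"
    and xz: "pos B z div 2 \<noteq> pos B x div 2"
  shows "even (cnt T (pos B x) + cnt T (pos B z)) =
     even (card {f\<in>T. interlaced B e f} + (if e \<in> T \<and> even (pos B x) = even (pos B z) then 1 else 0))"
proof -
  have fin: "finite T" using T finE finite_subset by blast
  define g where "g f = ind f (pos B x) + ind f (pos B z)" for f
  have "cnt T (pos B x) + cnt T (pos B z) = (\<Sum>f\<in>T. g f)"
    by (simp add: cnt_def g_def sum.distrib)
  then have "even (cnt T (pos B x) + cnt T (pos B z)) = even (card {f\<in>T. odd (g f)})"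
    using even_sum_card[OF fin] by simp
  also have "{f\<in>T. odd (g f)} = {f\<in>T. interlaced B e f} \<union> (if e \<in> T \<and> even (pos B x) = even (pos B z) then {e} else {})"
  proof -
    have "odd (g f) = interlaced B e f" if "f \<in> T" "f \<noteq> e" for f
      using ind_par_other[OF e _ _ x z xz, of f] that T unfolding g_def by auto
    moreover have "odd (g e) = (even (pos B x) = even (pos B z))"
      using ind_par_self[OF e x z xz] unfolding g_def by simp
    moreover have "\<not> interlaced B e e" by (simp add: interlaced_def)
    ultimately show ?thesis by auto
  qed
  also have "even (card \<dots>) = even (card {f\<in>T. interlaced B e f} + (if e \<in> T \<and> even (pos B x) = even (pos B z) then 1 else 0))"
  proof -
    have "e \<notin> {f\<in>T. interlaced B e f}" by (simp add: interlaced_def)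
    moreover have "finite {f\<in>T. interlaced B e f}" using fin by simp
    ultimately show ?thesis by auto
  qed
  finally show ?thesis .
qed

lemma K_formula: "S \<in> Kc lab \<Longrightarrow> k < n \<Longrightarrow> (w k \<in> S) = ((x0 \<in> S) \<noteq> odd (cnt (Tof S) k))"
proof (induction k)
  case 0 then show ?case by (simp add: w0 cnt_0)
next
  case (Suc k)
  have T: "Tof S \<subseteq> edges B" using Tof_sub[OF Suc.prems(1)] by auto
  define y where "y = w k"
  have y: "y \<in> flags B" "pos B y = k" using w_F pos_w Suc.prems y_def by auto
  show ?case
  proof (cases "even k")
    case True
    have "w (Suc k) = r2 B y" using True y_def by (simp add: w_Suc hk_def)
    moreover have "(r2 B y \<in> S) = ((y \<in> S) \<noteq> (eo y \<in> Tof S))" using Tof_iff[OF Suc.prems(1) y(1)] by auto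
    moreover have "cnt (Tof S) (Suc k) = cnt (Tof S) k + (if eo y \<in> Tof S then 1 else 0)"
      using cnt_even[OF T y(1)] y True by simp
    ultimately show ?thesis using Suc y_def by auto
  next
    case False
    have "w (Suc k) = r1 B y" using False y_def by (simp add: w_Suc hk_def)
    moreover have "(r1 B y \<in> S) = (y \<in> S)" using K_r1[OF Suc.prems(1) y(1)] .
    moreover have "cnt (Tof S) (Suc k) = cnt (Tof S) k" using cnt_odd[OF T] False by simp
    ultimately show ?thesis using Suc y_def by auto
  qed
qed

lemma K_mem: "S \<in> Kc lab \<Longrightarrow> x \<in> flags B \<Longrightarrow> (x \<in> S) = ((x0 \<in> S) \<noteq> odd (cnt (Tof S) (pos B x)))"
  using K_formula[of S lab "pos B x"] pos_lt w_pos by simp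

lemma Tof_valid: "S \<in> Kc lab \<Longrightarrow> Tof S \<in> Valid lab"
proof -
  assume S: "S \<in> Kc lab"
  have T: "Tof S \<subseteq> edges B" using Tof_sub[OF S] by auto
  have "even (card {f\<in>Tof S. interlaced B e f} + (if e \<in> Tof S \<and> Xt lab e then 1 else 0))"
    if e: "e \<in> edges B" "nonD lab e" for e
  proof -
    obtain x where x: "x \<in> e" using edge_ne[OF e(1)] by blast
    have xF: "x \<in> flags B" using x edge_sub e by auto
    have ex: "e = eo x" using edge_unique[OF e(1) x] .
    have nd: "nonD lab (eo x)" using e ex by simp
    have z: "sig lab x \<in> e" using sig_eo[OF xF, of lab] ex eo_self by metis
    have "(sig lab x \<in> S) = (x \<in> S)" using K_sig[OF S xF] .
    then have "even (cnt (Tof S) (pos B x) + cnt (Tof S) (pos B (sig lab x)))"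
      using K_mem[OF S xF] K_mem[OF S sigF[OF xF]] by auto
    then show ?thesis using cnt_par[OF T e(1) x z sig_end[OF xF nd]] sig_side[OF xF nd] ex by simp
  qed
  then show ?thesis using Tof_sub[OF S] unfolding Valid_def by blast
qed

lemma ST_K: "T \<in> Valid lab \<Longrightarrow> ST T \<in> Kc lab"
proof -
  assume V: "T \<in> Valid lab"
  have Tsub: "T \<subseteq> {e \<in> edges B. nonD lab e}" using V by (simp add: Valid_def)
  then have T: "T \<subseteq> edges B" by auto
  have "sig lab x \<in> ST T" if x: "x \<in> ST T" for x
  proof -
    have xF: "x \<in> flags B" using x by (simp add: ST_def)
    show ?thesis
    proof (cases "nonD lab (eo x)")
      case False
      then have "eo x \<notin> T" using Tsub by auto
      then show ?thesis using cnt_r2[OF T xF] sig_D[OF False] x r2F[OF xF] by (simp add: ST_def)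
    next
      case True
      have z: "sig lab x \<in> eo x" using sig_eo[OF xF, of lab] eo_self by metis
      have "even (card {f\<in>T. interlaced B (eo x) f} + (if eo x \<in> T \<and> Xt lab (eo x) then 1 else 0))"
        using V True eo_in[OF xF] by (simp add: Valid_def)
      then have "even (cnt T (pos B x) + cnt T (pos B (sig lab x)))"
        using cnt_par[OF T eo_in[OF xF] eo_self z sig_end[OF xF True]] sig_side[OF xF True] by simp
      then show ?thesis using x sigF[OF xF] by (simp add: ST_def)
    qed
  qed
  moreover have "r1 B x \<in> ST T" if x: "x \<in> ST T" for x
    using x cnt_r1[OF T] r1F by (simp add: ST_def)
  ultimately show ?thesis by (auto simp: Kc_def ST_def)
qed

lemma Tof_ST: "T \<in> Valid lab \<Longrightarrow> Tof (ST T) = T"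
proof -
  assume V: "T \<in> Valid lab"
  then have T: "T \<subseteq> edges B" by (auto simp: Valid_def)
  have ch: "((x \<in> ST T) \<noteq> (r2 B x \<in> ST T)) = (eo x \<in> T)" if x: "x \<in> flags B" for x
    using cnt_r2[OF T x] x r2F[OF x] by (auto simp: ST_def)
  show ?thesis
  proof (intro set_eqI iffI)
    fix e assume "e \<in> Tof (ST T)"
    then obtain x where x: "e \<in> edges B" "x \<in> e" "(x \<in> ST T) \<noteq> (r2 B x \<in> ST T)" by (auto simp: Tof_def)
    have xF: "x \<in> flags B" using x edge_sub by auto
    then show "e \<in> T" using ch[OF xF] x edge_unique by auto
  next
    fix e assume eT: "e \<in> T"
    then have e: "e \<in> edges B" using T by auto
    obtain x where x: "x \<in> e" using edge_ne[OF e] by blast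
    have xF: "x \<in> flags B" using x edge_sub e by auto
    have "eo x \<in> T" using edge_unique[OF e x] eT by simp
    then show "e \<in> Tof (ST T)" using ch[OF xF] e x by (auto simp: Tof_def)
  qed
qed

lemma compl_K: "S \<in> Kc lab \<Longrightarrow> flags B - S \<in> Kc lab"
proof -
  assume S: "S \<in> Kc lab"
  have "r1 B x \<in> flags B - S \<and> sig lab x \<in> flags B - S" if "x \<in> flags B - S" for x
  proof -
    have xF: "x \<in> flags B" "x \<notin> S" using that by auto
    show ?thesis using K_sig[OF S xF(1)] K_r1[OF S xF(1)] sigF[OF xF(1)] r1F[OF xF(1)] xF(2) by simp
  qed
  then show ?thesis unfolding Kc_def by blast
qed

lemma Tof_compl: "S \<in> Kc lab \<Longrightarrow> Tof (flags B - S) = Tof S"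
proof -
  assume S: "S \<in> Kc lab"
  have "((x \<in> flags B - S) \<noteq> (r2 B x \<in> flags B - S)) = ((x \<in> S) \<noteq> (r2 B x \<in> S))"
    if "x \<in> flags B" for x using that r2F[OF that] by simp
  then show ?thesis unfolding Tof_def using edge_sub by blast
qed

lemma x0_ST: "x0 \<notin> ST T" by (simp add: ST_def pos_x0 cnt_0)

lemma K_unique: "S \<in> Kc lab \<Longrightarrow> S = (if x0 \<in> S then flags B - ST (Tof S) else ST (Tof S))"
proof -
  assume S: "S \<in> Kc lab"
  have SF: "S \<subseteq> flags B" using S by (simp add: Kc_def)
  show ?thesis
    using K_mem[OF S] SF by (auto simp: ST_def)
qed

lemma card_K: "card (Kc lab) = 2 * card (Valid lab)"
proof -
  define f where "f S = (Tof S, x0 \<in> S)" for S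
  define g where "g = (\<lambda>(T, b). if b then flags B - ST T else ST T)"
  have "bij_betw f (Kc lab) (Valid lab \<times> (UNIV :: bool set))"
  proof (rule bij_betw_byWitness[where f' = g])
    show "\<forall>S\<in>Kc lab. g (f S) = S"
      using K_unique unfolding f_def g_def by auto
    show "\<forall>a'\<in>Valid lab \<times> UNIV. f (g a') = a'"
    proof
      fix a' assume a': "a' \<in> Valid lab \<times> (UNIV :: bool set)"
      obtain T b where Tb: "a' = (T, b)" by (cases a')
      have V: "T \<in> Valid lab" using a' Tb by simp
      have "Tof (flags B - ST T) = T" using Tof_compl[OF ST_K[OF V]] Tof_ST[OF V] by simp
      then show "f (g a') = a'" using Tb Tof_ST[OF V] x0_ST x0_in unfolding f_def g_def by auto
    qed
    show "f ` Kc lab \<subseteq> Valid lab \<times> UNIV"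
      using Tof_valid unfolding f_def by auto
    show "g ` (Valid lab \<times> UNIV) \<subseteq> Kc lab"
      using ST_K compl_K unfolding g_def by auto
  qed
  then have "card (Kc lab) = card (Valid lab \<times> (UNIV :: bool set))" by (rule bij_betw_same_card)
  then show ?thesis by (simp add: card_cartesian_product)
qed

lemma card_orbits: "2 ^ card {orbit_of {r1 B, sig lab} x | x. x \<in> flags B} = 2 * card (Valid lab)"
  using card_closed_sets[OF finF inv1 inv_sig, of lab] card_K[of lab] by (simp add: Kc_def)

end


context bq begin

lemma mem_set: "A \<subseteq> edges B \<Longrightarrow> x \<in> flags B \<Longrightarrow> (x \<in> \<Union>A) = (eo x \<in> A)"
  using edge_unique eo_self by blast

lemma mem_set': "A \<subseteq> edges B \<Longrightarrow> x \<in> flags B \<Longrightarrow> (\<exists>e\<in>A. x \<in> e) = (eo x \<in> A)"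
  using mem_set by auto

lemma mem_part: "x \<in> flags B \<Longrightarrow> (x \<in> \<Union>(part B c i)) = (c (eo x) = i)"
proof -
  assume x: "x \<in> flags B"
  have "part B c i \<subseteq> edges B" by (auto simp: part_def)
  then have "(x \<in> \<Union>(part B c i)) = (eo x \<in> part B c i)" using mem_set x by blast
  then show ?thesis using eo_in[OF x] by (simp add: part_def)
qed

lemma mem_part': "x \<in> flags B \<Longrightarrow> (\<exists>e\<in>part B c i. x \<in> e) = (c (eo x) = i)"
  using mem_part by auto

lemma r2_pdual: "A \<subseteq> edges B \<Longrightarrow> x \<in> flags B \<Longrightarrow>
  r2 (pdual A B) x = sig (\<lambda>e. if e \<in> A then 1 else 0) x"
  by (simp add: pdual_def sig_def mem_set')

lemma r2_tdt: "A \<subseteq> edges B \<Longrightarrow> x \<in> flags B \<Longrightarrow>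
  r2 (op_tdt A B) x = sig (\<lambda>e. if e \<in> A then 2 else 0) x"
  by (simp add: op_tdt_def pdual_def ptwist_def sig_def mem_set')

lemma r2_dt: "x \<in> flags B \<Longrightarrow>
  r2 (op_dt (part B c 2) (op_td (part B c 1) B)) x
   = sig (\<lambda>e. if c e = 1 then 1 else if c e = 2 then 2 else 0) x"
  by (simp add: op_dt_def op_td_def pdual_def ptwist_def sig_def mem_part' r2F r0F eo_r2 eo_r0)

lemma r2_full: "x \<in> flags B \<Longrightarrow>
  r2 (op_tdt (part B c 5) (op_dt (part B c 4) (op_td (part B c 3)
                   (ptwist (part B c 2) (pdual (part B c 1) B))))) x
   = sig (\<lambda>e. if c e = 1 \<or> c e = 3 then 1 else if c e = 4 \<or> c e = 5 then 2 else 0) x"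
  by (simp add: op_tdt_def op_dt_def op_td_def pdual_def ptwist_def sig_def mem_part' r2F r0F eo_r2 eo_r0)

end


lemma bouquet_bq: "bouquet B \<Longrightarrow> flags B \<noteq> {} \<Longrightarrow> bq B \<and> isov B = 0"
proof -
  assume b: "bouquet B" and ne: "flags B \<noteq> {}"
  have rg: "ribbon_graph B" and nv: "card (vertices B) + isov B = 1" using b by (auto simp: bouquet_def nv_def)
  have fin: "finite (vertices B)" using rg by (simp add: vertices_def ribbon_graph_def)
  have "vertices B \<noteq> {}" using ne by (auto simp: vertices_def)
  then have "card (vertices B) \<ge> 1" using fin by (simp add: Suc_leI card_gt_0_iff)
  then have "card (vertices B) = 1" "isov B = 0" using nv by auto
  then show ?thesis using rg ne by (simp add: bq_def)
qed

lemma bouquet_empty: "bouquet B \<Longrightarrow> flags B = {} \<Longrightarrow> isov B = 1 \<and> edges B = {}"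
  by (simp add: bouquet_def nv_def vertices_def edges_def)

definition Nb :: "'f rg \<Rightarrow> ('f set \<Rightarrow> nat) \<Rightarrow> nat" where
  "Nb B lab = card {orbit_of {r1 B, bq.sig B lab} x | x. x \<in> flags B}"

lemma nv_reduce:
  assumes b: "bouquet B" and G: "flags G = flags B" "r1 G = r1 B" "isov G = isov B"
    and r2G: "\<forall>x\<in>flags B. r2 G x = bq.sig B lab x"
  shows "nv G = Nb B lab + isov B"
proof (cases "flags B = {}")
  case True then show ?thesis using G by (simp add: nv_def Nb_def vertices_def)
next
  case False
  then interpret bq B using bouquet_bq[OF b] by simp
  have "{orbit_of {r1 G, r2 G} x | x. x \<in> flags G} = {orbit_of {r1 B, sig lab} x | x. x \<in> flags B}"
  proof -
    have "orbit_of {r1 B, r2 G} x = orbit_of {r1 B, sig lab} x" if "x \<in> flags B" for x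
      using orbit_cong2[of x "flags B" "r1 B" "sig lab" "r1 B" "r2 G"] that r1F sigF r2G by auto
    then show ?thesis using G by auto
  qed
  then show ?thesis using G by (simp add: nv_def Nb_def vertices_def)
qed

lemma valid_le:
  assumes b1: "bq B1" and b2: "bq B2" and bij: "bij_betw \<phi> (edges B1) (edges B2)"
    and il: "\<forall>e\<in>edges B1. \<forall>f\<in>edges B1. interlaced B1 e f \<longleftrightarrow> interlaced B2 (\<phi> e) (\<phi> f)"
    and ori: "\<forall>e\<in>edges B1. orientable_loop B1 e \<longleftrightarrow> orientable_loop B2 (\<phi> e)"
    and lab: "\<forall>e\<in>edges B1. lab2 (\<phi> e) = lab1 e"
  shows "card (bq.Valid B1 lab1) \<le> card (bq.Valid B2 lab2)"
proof (rule card_inj_on_le)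
  have inj: "inj_on \<phi> (edges B1)" using bij by (simp add: bij_betw_def)
  have sur: "\<phi> ` edges B1 = edges B2" using bij by (simp add: bij_betw_def)
  have V1: "bq.Valid B1 lab1 \<subseteq> Pow (edges B1)" by (auto simp: bq.Valid_def[OF b1])
  show "inj_on (image \<phi>) (bq.Valid B1 lab1)"
    using inj_on_image_Pow[OF inj] V1 inj_on_subset by blast
  show "finite (bq.Valid B2 lab2)"
    using bq.finE[OF b2] by (rule rev_finite_subset[OF finite_Pow_iff[THEN iffD2]]) (auto simp: bq.Valid_def[OF b2])
  show "image \<phi> ` bq.Valid B1 lab1 \<subseteq> bq.Valid B2 lab2"
  proof
    fix T2 assume "T2 \<in> image \<phi> ` bq.Valid B1 lab1"
    then obtain T where T: "T \<in> bq.Valid B1 lab1" "T2 = \<phi> ` T" by blast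
    have Tsub: "T \<subseteq> {e \<in> edges B1. bq.nonD lab1 e}" using T by (simp add: bq.Valid_def[OF b1])
    have cond: "\<And>e. e \<in> edges B1 \<Longrightarrow> bq.nonD lab1 e \<Longrightarrow>
       even (card {f\<in>T. interlaced B1 e f} + (if e \<in> T \<and> bq.Xt B1 lab1 e then 1 else 0))"
      using T by (simp add: bq.Valid_def[OF b1])
    have nd: "bq.nonD lab2 (\<phi> e) = bq.nonD lab1 e" if "e \<in> edges B1" for e
      using lab that by (simp add: bq.nonD_def[OF b2] bq.nonD_def[OF b1])
    have xt: "bq.Xt B2 lab2 (\<phi> e) = bq.Xt B1 lab1 e" if "e \<in> edges B1" for e
      using lab ori that by (simp add: bq.Xt_def[OF b2] bq.Xt_def[OF b1])
    have sub2: "\<phi> ` T \<subseteq> {e \<in> edges B2. bq.nonD lab2 e}"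
      using Tsub sur nd by auto
    have cond2: "even (card {f\<in>\<phi> ` T. interlaced B2 e2 f} + (if e2 \<in> \<phi> ` T \<and> bq.Xt B2 lab2 e2 then 1 else 0))"
      if e2: "e2 \<in> edges B2" "bq.nonD lab2 e2" for e2
    proof -
      obtain e where e: "e \<in> edges B1" "e2 = \<phi> e" using e2 sur by auto
      have nd1: "bq.nonD lab1 e" using nd[OF e(1)] e e2 by simp
      have "{f\<in>\<phi> ` T. interlaced B2 e2 f} = \<phi> ` {f\<in>T. interlaced B1 e f}"
        using il e Tsub by auto
      moreover have "card (\<phi> ` {f\<in>T. interlaced B1 e f}) = card {f\<in>T. interlaced B1 e f}"
        using inj Tsub by (intro card_image) (auto intro: inj_on_subset)
      moreover have "(e2 \<in> \<phi> ` T) = (e \<in> T)"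
        using inj Tsub e by (auto dest: inj_onD)
      moreover have "bq.Xt B2 lab2 e2 = bq.Xt B1 lab1 e" using xt e by simp
      ultimately show ?thesis using cond[OF e(1) nd1] by simp
    qed
    show "T2 \<in> bq.Valid B2 lab2"
      unfolding bq.Valid_def[OF b2] T(2) using sub2 cond2 by blast
  qed
qed

lemma core_eq:
  assumes b1: "bouquet B1" and b2: "bouquet B2" and bij: "bij_betw \<phi> (edges B1) (edges B2)"
    and il: "\<forall>e\<in>edges B1. \<forall>f\<in>edges B1. interlaced B1 e f \<longleftrightarrow> interlaced B2 (\<phi> e) (\<phi> f)"
    and ori: "\<forall>e\<in>edges B1. orientable_loop B1 e \<longleftrightarrow> orientable_loop B2 (\<phi> e)"
    and lab: "\<forall>e\<in>edges B1. lab2 (\<phi> e) = lab1 e"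
  shows "Nb B1 lab1 + isov B1 = Nb B2 lab2 + isov B2"
proof (cases "flags B1 = {}")
  case True
  then have "edges B1 = {}" by (simp add: edges_def)
  then have "edges B2 = {}" using bij by (simp add: bij_betw_def)
  then have "flags B2 = {}" by (auto simp: edges_def)
  then show ?thesis using True bouquet_empty[OF b1] bouquet_empty[OF b2] by (simp add: Nb_def)
next
  case False
  then have "edges B1 \<noteq> {}" by (auto simp: edges_def)
  then have "edges B2 \<noteq> {}" using bij by (auto simp: bij_betw_def)
  then have F2: "flags B2 \<noteq> {}" by (auto simp: edges_def)
  have q1: "bq B1" "isov B1 = 0" using bouquet_bq[OF b1 False] by auto
  have q2: "bq B2" "isov B2 = 0" using bouquet_bq[OF b2 F2] by auto
  define \<psi> where "\<psi> = inv_into (edges B1) \<phi>"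
  have bij': "bij_betw \<psi> (edges B2) (edges B1)" using bij_betw_inv_into[OF bij] \<psi>_def by simp
  have fpsi: "\<phi> (\<psi> e2) = e2" if "e2 \<in> edges B2" for e2
    using that bij unfolding \<psi>_def by (simp add: bij_betw_def f_inv_into_f)
  have psiE: "\<psi> e2 \<in> edges B1" if "e2 \<in> edges B2" for e2
    using bij' that by (simp add: bij_betwE)
  have il': "\<forall>e\<in>edges B2. \<forall>f\<in>edges B2. interlaced B2 e f \<longleftrightarrow> interlaced B1 (\<psi> e) (\<psi> f)"
    using il fpsi psiE by metis
  have ori': "\<forall>e\<in>edges B2. orientable_loop B2 e \<longleftrightarrow> orientable_loop B1 (\<psi> e)"
    using ori fpsi psiE by metis
  have lab': "\<forall>e\<in>edges B2. lab1 (\<psi> e) = lab2 e"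
    using lab fpsi psiE by metis
  have "card (bq.Valid B1 lab1) \<le> card (bq.Valid B2 lab2)"
    by (rule valid_le[OF q1(1) q2(1) bij il ori lab])
  moreover have "card (bq.Valid B2 lab2) \<le> card (bq.Valid B1 lab1)"
    by (rule valid_le[OF q2(1) q1(1) bij' il' ori' lab'])
  ultimately have "card (bq.Valid B1 lab1) = card (bq.Valid B2 lab2)" by simp
  then have "(2::nat) ^ Nb B1 lab1 = 2 ^ Nb B2 lab2"
    using bq.card_orbits[OF q1(1), of lab1] bq.card_orbits[OF q2(1), of lab2] by (simp add: Nb_def)
  then have "Nb B1 lab1 = Nb B2 lab2" by (simp add: power_inject_exp)
  then show ?thesis using q1 q2 by simp
qed

lemma nv_pdual: "bouquet B \<Longrightarrow> A \<subseteq> edges B \<Longrightarrow>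
   nv (pdual A B) = Nb B (\<lambda>e. if e \<in> A then 1 else 0) + isov B"
proof (rule nv_reduce)
  assume b: "bouquet B" and A: "A \<subseteq> edges B"
  show "\<forall>x\<in>flags B. r2 (pdual A B) x = bq.sig B (\<lambda>e. if e \<in> A then 1 else 0) x"
  proof (cases "flags B = {}")
    case False
    then interpret bq B using bouquet_bq[OF b] by simp
    show ?thesis using r2_pdual[OF A] by simp
  qed simp
qed (auto simp: pdual_def)

lemma nv_tdt: "bouquet B \<Longrightarrow> A \<subseteq> edges B \<Longrightarrow>
   nv (op_tdt A B) = Nb B (\<lambda>e. if e \<in> A then 2 else 0) + isov B"
proof (rule nv_reduce)
  assume b: "bouquet B" and A: "A \<subseteq> edges B"
  show "\<forall>x\<in>flags B. r2 (op_tdt A B) x = bq.sig B (\<lambda>e. if e \<in> A then 2 else 0) x"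
  proof (cases "flags B = {}")
    case False
    then interpret bq B using bouquet_bq[OF b] by simp
    show ?thesis using r2_tdt[OF A] by simp
  qed simp
qed (auto simp: op_tdt_def pdual_def ptwist_def)

lemma nv_dt: "bouquet B \<Longrightarrow>
   nv (op_dt (part B c 2) (op_td (part B c 1) B)) = Nb B (\<lambda>e. if c e = 1 then 1 else if c e = 2 then 2 else 0) + isov B"
proof (rule nv_reduce)
  assume b: "bouquet B"
  show "\<forall>x\<in>flags B. r2 (op_dt (part B c 2) (op_td (part B c 1) B)) x = bq.sig B (\<lambda>e. if c e = 1 then 1 else if c e = 2 then 2 else 0) x"
  proof (cases "flags B = {}")
    case False
    then interpret bq B using bouquet_bq[OF b] by simp
    show ?thesis using r2_dt by simp
  qed simp
qed (auto simp: op_dt_def op_td_def pdual_def ptwist_def)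

lemma nv_full: "bouquet B \<Longrightarrow>
   nv (op_tdt (part B c 5) (op_dt (part B c 4) (op_td (part B c 3)
                   (ptwist (part B c 2) (pdual (part B c 1) B)))))
   = Nb B (\<lambda>e. if c e = 1 \<or> c e = 3 then 1 else if c e = 4 \<or> c e = 5 then 2 else 0) + isov B"
proof (rule nv_reduce)
  assume b: "bouquet B"
  show "\<forall>x\<in>flags B. r2 (op_tdt (part B c 5) (op_dt (part B c 4) (op_td (part B c 3)
                   (ptwist (part B c 2) (pdual (part B c 1) B))))) x
     = bq.sig B (\<lambda>e. if c e = 1 \<or> c e = 3 then 1 else if c e = 4 \<or> c e = 5 then 2 else 0) x"
  proof (cases "flags B = {}")
    case False
    then interpret bq B using bouquet_bq[OF b] by simp
    show ?thesis using r2_full by simp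
  qed simp
qed (auto simp: op_tdt_def op_dt_def op_td_def pdual_def ptwist_def)

lemma colour_bij:
  assumes bij: "bij_betw \<phi> E1 E2"
  shows "bij_betw (\<lambda>c. restrict (c \<circ> inv_into E1 \<phi>) E2) (E1 \<rightarrow>\<^sub>E S) (E2 \<rightarrow>\<^sub>E S)"
proof (rule bij_betw_byWitness[where f' = "\<lambda>c. restrict (c \<circ> \<phi>) E1"])
  have fpsi: "\<phi> (inv_into E1 \<phi> e2) = e2" if "e2 \<in> E2" for e2
    using that bij by (simp add: bij_betw_def f_inv_into_f)
  have psif: "inv_into E1 \<phi> (\<phi> e) = e" if "e \<in> E1" for e
    using that bij by (simp add: bij_betw_def inv_into_f_f)
  have psiE: "inv_into E1 \<phi> e2 \<in> E1" if "e2 \<in> E2" for e2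
    using bij_betw_inv_into[OF bij] that by (simp add: bij_betwE)
  have phiE: "\<phi> e \<in> E2" if "e \<in> E1" for e using bij that by (simp add: bij_betwE)
  show "\<forall>c\<in>E1 \<rightarrow>\<^sub>E S. restrict (restrict (c \<circ> inv_into E1 \<phi>) E2 \<circ> \<phi>) E1 = c"
    using phiE psif by (auto simp: PiE_def extensional_def fun_eq_iff)
  show "\<forall>c\<in>E2 \<rightarrow>\<^sub>E S. restrict (restrict (c \<circ> \<phi>) E1 \<circ> inv_into E1 \<phi>) E2 = c"
    using psiE fpsi by (auto simp: PiE_def extensional_def fun_eq_iff)
  show "(\<lambda>c. restrict (c \<circ> inv_into E1 \<phi>) E2) ` (E1 \<rightarrow>\<^sub>E S) \<subseteq> E2 \<rightarrow>\<^sub>E S"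
    using psiE by auto
  show "(\<lambda>c. restrict (c \<circ> \<phi>) E1) ` (E2 \<rightarrow>\<^sub>E S) \<subseteq> E1 \<rightarrow>\<^sub>E S"
    using phiE by auto
qed

theorem mainTheorem8:
  fixes B1 :: "'a rg" and B2 :: "'b rg"
  assumes "bouquet B1" and "bouquet B2" and "SI_iso B1 B2"
  shows "P_d B1 = P_d B2 \<and> P_dt B1 = P_dt B2 \<and> P_tdt B1 = P_tdt B2
         \<and> P_dt_full B1 = P_dt_full B2"
proof -
  obtain \<phi> where bij: "bij_betw \<phi> (edges B1) (edges B2)"
    and il: "\<forall>e\<in>edges B1. \<forall>f\<in>edges B1. interlaced B1 e f \<longleftrightarrow> interlaced B2 (\<phi> e) (\<phi> f)"
    and ori: "\<forall>e\<in>edges B1. orientable_loop B1 e \<longleftrightarrow> orientable_loop B2 (\<phi> e)"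
    using assms(3) unfolding SI_iso_def by blast
  note ce = core_eq[OF assms(1,2) bij il ori]
  have inj: "inj_on \<phi> (edges B1)" using bij by (simp add: bij_betw_def)
  have pw: "bij_betw (image \<phi>) (Pow (edges B1)) (Pow (edges B2))" using bij_betw_image_Pow[OF bij] .
  define \<Phi> where "\<Phi> c = restrict (c \<circ> inv_into (edges B1) \<phi>) (edges B2)" for c :: "'a set \<Rightarrow> nat"
  have Phi_val: "\<Phi> c (\<phi> e) = c e" if "e \<in> edges B1" for c e
    using that bij unfolding \<Phi>_def by (simp add: bij_betw_def inv_into_f_f bij_betwE[OF bij])
  have subst_lab: "(if \<phi> e \<in> \<phi> ` A then k else 0) = (if e \<in> A then k else 0)"
    if "A \<subseteq> edges B1" "e \<in> edges B1" for A e and k :: nat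
    using inj that by (auto dest: inj_onD)
  have "P_d B1 = P_d B2"
  proof -
    have "P_d B2 = (\<Sum>A\<in>Pow (edges B1). monom 1 (nv (pdual (\<phi> ` A) B2)))"
      unfolding P_d_def by (rule sum.reindex_bij_betw[OF pw, symmetric])
    also have "\<dots> = P_d B1" unfolding P_d_def
    proof (rule sum.cong[OF refl])
      fix A assume A: "A \<in> Pow (edges B1)"
      have A2: "\<phi> ` A \<subseteq> edges B2" using A bij by (auto simp: bij_betw_def)
      have "nv (pdual (\<phi> ` A) B2) = nv (pdual A B1)"
        using nv_pdual[OF assms(1)] nv_pdual[OF assms(2) A2] ce[of "\<lambda>e. if e \<in> \<phi> ` A then 1 else 0" "\<lambda>e. if e \<in> A then 1 else 0"]
          subst_lab A by simp
      then show "monom 1 (nv (pdual (\<phi> ` A) B2)) = monom 1 (nv (pdual A B1))" by simp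
    qed
    finally show ?thesis by simp
  qed
  moreover have "P_tdt B1 = P_tdt B2"
  proof -
    have "P_tdt B2 = (\<Sum>A\<in>Pow (edges B1). monom 1 (nv (op_tdt (\<phi> ` A) B2)))"
      unfolding P_tdt_def by (rule sum.reindex_bij_betw[OF pw, symmetric])
    also have "\<dots> = P_tdt B1" unfolding P_tdt_def
    proof (rule sum.cong[OF refl])
      fix A assume A: "A \<in> Pow (edges B1)"
      have A2: "\<phi> ` A \<subseteq> edges B2" using A bij by (auto simp: bij_betw_def)
      have "nv (op_tdt (\<phi> ` A) B2) = nv (op_tdt A B1)"
        using nv_tdt[OF assms(1)] nv_tdt[OF assms(2) A2] ce[of "\<lambda>e. if e \<in> \<phi> ` A then 2 else 0" "\<lambda>e. if e \<in> A then 2 else 0"]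
          subst_lab A by simp
      then show "monom 1 (nv (op_tdt (\<phi> ` A) B2)) = monom 1 (nv (op_tdt A B1))" by simp
    qed
    finally show ?thesis by simp
  qed
  moreover have "P_dt B1 = P_dt B2"
  proof -
    have "P_dt B2 = (\<Sum>c\<in>edges B1 \<rightarrow>\<^sub>E {..<3::nat}. monom 1 (nv (op_dt (part B2 (\<Phi> c) 2) (op_td (part B2 (\<Phi> c) 1) B2))))"
      unfolding P_dt_def \<Phi>_def by (rule sum.reindex_bij_betw[OF colour_bij[OF bij], symmetric])
    also have "\<dots> = P_dt B1" unfolding P_dt_def
    proof (rule sum.cong[OF refl])
      fix c assume c: "c \<in> edges B1 \<rightarrow>\<^sub>E {..<3::nat}"
      have "nv (op_dt (part B2 (\<Phi> c) 2) (op_td (part B2 (\<Phi> c) 1) B2)) = nv (op_dt (part B1 c 2) (op_td (part B1 c 1) B1))"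
        using nv_dt[OF assms(1), of c] nv_dt[OF assms(2), of "\<Phi> c"]
          ce[of "\<lambda>e. if \<Phi> c e = 1 then 1 else if \<Phi> c e = 2 then 2 else 0" "\<lambda>e. if c e = 1 then 1 else if c e = 2 then 2 else 0"]
          Phi_val by simp
      then show "monom 1 (nv (op_dt (part B2 (\<Phi> c) 2) (op_td (part B2 (\<Phi> c) 1) B2))) = monom 1 (nv (op_dt (part B1 c 2) (op_td (part B1 c 1) B1)))" by simp
    qed
    finally show ?thesis by simp
  qed
  moreover have "P_dt_full B1 = P_dt_full B2"
  proof -
    have "P_dt_full B2 = (\<Sum>c\<in>edges B1 \<rightarrow>\<^sub>E {..<6::nat}. monom 1 (nv (op_tdt (part B2 (\<Phi> c) 5) (op_dt (part B2 (\<Phi> c) 4) (op_td (part B2 (\<Phi> c) 3)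
                   (ptwist (part B2 (\<Phi> c) 2) (pdual (part B2 (\<Phi> c) 1) B2)))))))"
      unfolding P_dt_full_def \<Phi>_def by (rule sum.reindex_bij_betw[OF colour_bij[OF bij], symmetric])
    also have "\<dots> = P_dt_full B1" unfolding P_dt_full_def
    proof (rule sum.cong[OF refl])
      fix c assume c: "c \<in> edges B1 \<rightarrow>\<^sub>E {..<6::nat}"
      have "nv (op_tdt (part B2 (\<Phi> c) 5) (op_dt (part B2 (\<Phi> c) 4) (op_td (part B2 (\<Phi> c) 3)
                   (ptwist (part B2 (\<Phi> c) 2) (pdual (part B2 (\<Phi> c) 1) B2)))))
         = nv (op_tdt (part B1 c 5) (op_dt (part B1 c 4) (op_td (part B1 c 3)
                   (ptwist (part B1 c 2) (pdual (part B1 c 1) B1)))))"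
        using nv_full[OF assms(1), of c] nv_full[OF assms(2), of "\<Phi> c"]
          ce[of "\<lambda>e. if \<Phi> c e = 1 \<or> \<Phi> c e = 3 then 1 else if \<Phi> c e = 4 \<or> \<Phi> c e = 5 then 2 else 0"
                "\<lambda>e. if c e = 1 \<or> c e = 3 then 1 else if c e = 4 \<or> c e = 5 then 2 else 0"]
          Phi_val by simp
      then show "monom 1 (nv (op_tdt (part B2 (\<Phi> c) 5) (op_dt (part B2 (\<Phi> c) 4) (op_td (part B2 (\<Phi> c) 3)
                   (ptwist (part B2 (\<Phi> c) 2) (pdual (part B2 (\<Phi> c) 1) B2))))))
         = monom 1 (nv (op_tdt (part B1 c 5) (op_dt (part B1 c 4) (op_td (part B1 c 3)
                   (ptwist (part B1 c 2) (pdual (part B1 c 1) B1))))))" by simp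
    qed
    finally show ?thesis by simp
  qed
  ultimately show ?thesis by simp
qed


end
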